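(* In any execution of Algorithm $\mathsf{AG}$ (described in the context) with a guild, there exists a process $p_i$ in the maximal guild such that the set $S_i$ that $p_i$ sent in its $\mathrm{DistributeS}$ message is, after the execution of the algorithm, contained in the set $U_k$ of every process $p_k$ in the maximal guild.
   Context: System model: a finite set $\mathcal{P}=\{p_1,\dots,p_n\}$ of processes communicating asynchronously over authenticated point-to-point links; every message sent from a correct process to a correct process is eventually delivered. A process that follows its protocol is correct; others (faulty, Byzantine) may behave arbitrarily. $F\subseteq\mathcal{P}$ denotes the (unknown) set of faulty processes of an execution. For $\mathcal{A}\subseteq 2^{\mathcal{P}}$, write $\mathcal{A}^*=\{A' : A'\subseteq A,\ A\in\mathcal{A}\}$. An asymmetric fail-prone system is an array $\mathbb{F}=[\mathcal{F}_1,\dots,\mathcal{F}_n]$ with $\mathcal{F}_i\subseteq 2^{\mathcal{P}}$. An asymmetric Byzantine quorum system for $\mathbb{F}$ is an array $\mathbb{Q}=[\mathcal{Q}_1,\dots,\mathcal{Q}_n]$ with $\mathcal{Q}_i\subseteq 2^{\mathcal{P}}$ (quorums for $p_i$) satisfying: (consistency) for all $i,j$, all $Q_i\in\mathcal{Q}_i$, $Q_j\in\mathcal{Q}_j$, $F_{ij}\in\mathcal{F}_i^*\cap\mathcal{F}_j^*$: $Q_i\cap Q_j\not\subseteq F_{ij}$; (availability) for all $i$ and $F_i\in\mathcal{F}_i$ there is $Q_i\in\mathcal{Q}_i$ with $F_i\cap Q_i=\emptyset$. A kernel for $p_i$ is a set $K\subseteq\mathcal{P}$ intersecting every $Q\in\mathcal{Q}_i$;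 $\mathcal{K}_i$ is the set of kernels for $p_i$. A correct process $p_i$ is wise if $F\in\mathcal{F}_i^*$. A guild is a set $\mathcal{G}$ of wise processes such that every $p_i\in\mathcal{G}$ has some $Q_i\in\mathcal{Q}_i$ with $Q_i\subseteq\mathcal{G}$. An execution with a guild is one in which a nonempty guild exists; the maximal guild $\mathcal{G}_{max}$ is the union of all guilds. Asymmetric reliable broadcast (arb-broadcast / arb-deliver) guarantees, in every execution with a guild: if a correct process arb-broadcasts $m$, every process of $\mathcal{G}_{max}$ eventually arb-delivers $m$; for each sender, all processes of $\mathcal{G}_{max}$ that arb-deliver from it deliver the same message; if some process of $\mathcal{G}_{max}$ arb-delivers a message from a sender, all processes of $\mathcal{G}_{max}$ eventually arb-deliver a message from that sender; a correct process arb-delivers at most one message per sender, and from a correct sender only a message it arb-broadcast. Algorithm $\mathsf{AG}$ (code of $p_i$; each correct process invokes ag-propose$(x_i)$ exactly once; each guarded "upon there being ..." action executes at most once, message handlers once per message). State: sets $S_i,T_i,U_i$ initially empty, boolean $sentT$ initially false. (1) Upon ag-propose$(x_i)$: arb-broadcast $(p_i,x_i)$. (2) Upon arb-delivering $(p_j,x_j)$ from $p_j$: $S_i\gets S_i\cup\{(p_j,x_j)\}$. (3) Upon there being $Q\in\mathcal{Q}_i$ such that for every $p_j\in Q$ some pair $(p_j,\cdot)\in S_i$: send $\langle\mathrm{DistributeS},p_i,S_i\rangle$ to all. (4) For a received $\langle\mathrm{DistributeS},p_j,S_j\rangle$: once $S_j\subseteq S_i$, provided $sentT$ is false at that moment,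 set $T_i\gets T_i\cup S_j$ and send $\langle\mathrm{Ack},p_i\rangle$ to $p_j$. (5) Upon Ack received from every member of some $Q\in\mathcal{Q}_i$: send Ready to all. (6) Upon Ready received from every member of some $Q\in\mathcal{Q}_i$: send Confirm to all. (7) Upon Confirm received from every member of some $K\in\mathcal{K}_i$: send Confirm to all. (8) Upon Confirm received from every member of some $Q\in\mathcal{Q}_i$: send $\langle\mathrm{DistributeT},p_i,T_i\rangle$ to all and set $sentT\gets$ true. (9) For a received $\langle\mathrm{DistributeT},p_j,T_j\rangle$ from $p_j$: once $T_j\subseteq S_i$, set $U_i\gets U_i\cup T_j$. (10) Upon DistributeT received from every member of some $Q\in\mathcal{Q}_i$: ag-deliver$(U_i)$. *)

theory Defs
  imports Main
begin

text \<open>Processes are the elements of a (finite) type 'p; the process set P is UNIV.\<close>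

definition dstar :: "'a set set \<Rightarrow> 'a set set" where
  "dstar A = {A'. \<exists>B\<in>A. A' \<subseteq> B}"

definition asym_quorum_system :: "('p \<Rightarrow> 'p set set) \<Rightarrow> ('p \<Rightarrow> 'p set set) \<Rightarrow> bool" where
  "asym_quorum_system Fp Qs \<longleftrightarrow>
     (\<forall>i j. \<forall>Qi\<in>Qs i. \<forall>Qj\<in>Qs j. \<forall>Fij\<in>dstar (Fp i) \<inter> dstar (Fp j). \<not> (Qi \<inter> Qj \<subseteq> Fij)) \<and>
     (\<forall>i. \<forall>Fi\<in>Fp i. \<exists>Qi\<in>Qs i. Fi \<inter> Qi = {})"

definition is_kernel :: "('p \<Rightarrow> 'p set set) \<Rightarrow> 'p \<Rightarrow> 'p set \<Rightarrow> bool" where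
  "is_kernel Qs i K \<longleftrightarrow> (\<forall>Q\<in>Qs i. K \<inter> Q \<noteq> {})"

definition wise :: "('p \<Rightarrow> 'p set set) \<Rightarrow> 'p set \<Rightarrow> 'p \<Rightarrow> bool" where
  "wise Fp F i \<longleftrightarrow> i \<notin> F \<and> F \<in> dstar (Fp i)"

definition guild :: "('p \<Rightarrow> 'p set set) \<Rightarrow> ('p \<Rightarrow> 'p set set) \<Rightarrow> 'p set \<Rightarrow> 'p set \<Rightarrow> bool" where
  "guild Fp Qs F G \<longleftrightarrow> (\<forall>i\<in>G. wise Fp F i) \<and> (\<forall>i\<in>G. \<exists>Q\<in>Qs i. Q \<subseteq> G)"

definition Gmax :: "('p \<Rightarrow> 'p set set) \<Rightarrow> ('p \<Rightarrow> 'p set set) \<Rightarrow> 'p set \<Rightarrow> 'p set" where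
  "Gmax Fp Qs F = \<Union>{G. guild Fp Qs F G}"

definition exec_with_guild :: "('p \<Rightarrow> 'p set set) \<Rightarrow> ('p \<Rightarrow> 'p set set) \<Rightarrow> 'p set \<Rightarrow> bool" where
  "exec_with_guild Fp Qs F \<longleftrightarrow> (\<exists>G. guild Fp Qs F G \<and> G \<noteq> {})"

datatype ('p,'v) msg = DistS "('p \<times> 'v) set" | Ack | Ready | Confirm | DistT "('p \<times> 'v) set"

text \<open>Local state of a correct process. ls_sentS records whether (and with which set S_i)
  action (3) was executed; ls_done5/6/7 record execution of guarded actions (5),(6),(7);
  ls_sentT is the variable sentT (and records action (8)); ls_out records ag-deliver (10).
  ls_pendS / ls_pendT hold received DistributeS / DistributeT messages (sender, set)
  whose handler (4) / (9) is still waiting for its condition.\<close>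

record ('p,'v) lstate =
  ls_prop :: bool
  ls_S :: "('p \<times> 'v) set"
  ls_T :: "('p \<times> 'v) set"
  ls_U :: "('p \<times> 'v) set"
  ls_sentT :: bool
  ls_sentS :: "('p \<times> 'v) set option"
  ls_pendS :: "('p \<times> ('p \<times> 'v) set) set"
  ls_pendT :: "('p \<times> ('p \<times> 'v) set) set"
  ls_acks :: "'p set"
  ls_readys :: "'p set"
  ls_confs :: "'p set"
  ls_dts :: "'p set"
  ls_done5 :: bool
  ls_done6 :: bool
  ls_done7 :: bool
  ls_out :: "('p \<times> 'v) set option"

text \<open>Global state: local states and the set of in-transit messages (source, destination, message).\<close>
record ('p,'v) gstate =
  g_loc :: "'p \<Rightarrow> ('p,'v) lstate"
  g_net :: "('p \<times> 'p \<times> ('p,'v) msg) set"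

definition init_l :: "('p,'v) lstate" where
  "init_l = \<lparr>ls_prop = False, ls_S = {}, ls_T = {}, ls_U = {}, ls_sentT = False, ls_sentS = None,
     ls_pendS = {}, ls_pendT = {}, ls_acks = {}, ls_readys = {}, ls_confs = {}, ls_dts = {},
     ls_done5 = False, ls_done6 = False, ls_done7 = False, ls_out = None\<rparr>"

definition init_g :: "('p,'v) gstate" where
  "init_g = \<lparr>g_loc = (\<lambda>_. init_l), g_net = {}\<rparr>"

definition covered :: "('p \<Rightarrow> 'p set set) \<Rightarrow> 'p \<Rightarrow> 'p set \<Rightarrow> bool" where
  "covered Qs i A \<longleftrightarrow> (\<exists>Q\<in>Qs i. Q \<subseteq> A)"

definition to_all :: "('p,'v) msg \<Rightarrow> ('p \<times> ('p,'v) msg) set" where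
  "to_all m = UNIV \<times> {m}"

text \<open>Guarded actions (3),(5),(6),(7),(8),(10) fire immediately (each at most once)
  as soon as their condition holds.  None of them changes the condition of another,
  so they are applied simultaneously after every local event.\<close>

definition settle_st :: "('p \<Rightarrow> 'p set set) \<Rightarrow> 'p \<Rightarrow> ('p,'v) lstate \<Rightarrow> ('p,'v) lstate" where
  "settle_st Qs i s = s\<lparr>
     ls_sentS := (if ls_sentS s = None \<and> covered Qs i (fst ` ls_S s) then Some (ls_S s) else ls_sentS s),
     ls_done5 := (ls_done5 s \<or> covered Qs i (ls_acks s)),
     ls_done6 := (ls_done6 s \<or> covered Qs i (ls_readys s)),
     ls_done7 := (ls_done7 s \<or> (\<exists>K. is_kernel Qs i K \<and> K \<subseteq> ls_confs s)),
     ls_sentT := (ls_sentT s \<or> covered Qs i (ls_confs s)),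
     ls_out := (if ls_out s = None \<and> covered Qs i (ls_dts s) then Some (ls_U s) else ls_out s)\<rparr>"

definition settle_out :: "('p \<Rightarrow> 'p set set) \<Rightarrow> 'p \<Rightarrow> ('p,'v) lstate \<Rightarrow> ('p \<times> ('p,'v) msg) set" where
  "settle_out Qs i s =
     (if ls_sentS s = None \<and> covered Qs i (fst ` ls_S s) then to_all (DistS (ls_S s)) else {}) \<union>
     (if \<not> ls_done5 s \<and> covered Qs i (ls_acks s) then to_all Ready else {}) \<union>
     (if \<not> ls_done6 s \<and> covered Qs i (ls_readys s) then to_all Confirm else {}) \<union>
     (if \<not> ls_done7 s \<and> (\<exists>K. is_kernel Qs i K \<and> K \<subseteq> ls_confs s) then to_all Confirm else {}) \<union>
     (if \<not> ls_sentT s \<and> covered Qs i (ls_confs s) then to_all (DistT (ls_T s)) else {})"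

text \<open>Receipt of a point-to-point message m from (authenticated) sender j:
  handlers (4) and (9) fire immediately if their condition already holds, otherwise
  they wait in ls_pendS / ls_pendT.\<close>

definition recv_local :: "'p \<Rightarrow> ('p,'v) msg \<Rightarrow> ('p,'v) lstate \<Rightarrow> ('p,'v) lstate \<times> ('p \<times> ('p,'v) msg) set" where
  "recv_local j m s = (case m of
      DistS X \<Rightarrow>
        (if X \<subseteq> ls_S s then
           (if \<not> ls_sentT s then (s\<lparr>ls_T := ls_T s \<union> X\<rparr>, {(j, Ack)}) else (s, {}))
         else (s\<lparr>ls_pendS := insert (j, X) (ls_pendS s)\<rparr>, {}))
    | Ack \<Rightarrow> (s\<lparr>ls_acks := insert j (ls_acks s)\<rparr>, {})
    | Ready \<Rightarrow> (s\<lparr>ls_readys := insert j (ls_readys s)\<rparr>, {})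
    | Confirm \<Rightarrow> (s\<lparr>ls_confs := insert j (ls_confs s)\<rparr>, {})
    | DistT X \<Rightarrow>
        (if X \<subseteq> ls_S s then (s\<lparr>ls_dts := insert j (ls_dts s), ls_U := ls_U s \<union> X\<rparr>, {})
         else (s\<lparr>ls_dts := insert j (ls_dts s), ls_pendT := insert (j, X) (ls_pendT s)\<rparr>, {})))"

text \<open>arb-delivery of value x from sender j (action (2)); waiting handlers (4),(9)
  whose condition becomes true fire at that moment.\<close>

definition arbdel_local :: "'p \<Rightarrow> 'v \<Rightarrow> ('p,'v) lstate \<Rightarrow> ('p,'v) lstate \<times> ('p \<times> ('p,'v) msg) set" where
  "arbdel_local j x s =
     (let S' = insert (j, x) (ls_S s);
          RS = {p \<in> ls_pendS s. snd p \<subseteq> S'};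
          RT = {p \<in> ls_pendT s. snd p \<subseteq> S'}
      in (s\<lparr>ls_S := S', ls_pendS := ls_pendS s - RS, ls_pendT := ls_pendT s - RT,
            ls_T := (if ls_sentT s then ls_T s else ls_T s \<union> \<Union>(snd ` RS)),
            ls_U := ls_U s \<union> \<Union>(snd ` RT)\<rparr>,
          (if ls_sentT s then {} else {(k, Ack) | k. k \<in> fst ` RS})))"

definition do_local :: "('p \<Rightarrow> 'p set set) \<Rightarrow> 'p \<Rightarrow> ('p,'v) gstate
    \<Rightarrow> ('p,'v) lstate \<times> ('p \<times> ('p,'v) msg) set \<Rightarrow> ('p,'v) gstate" where
  "do_local Qs i \<sigma> r =
     (let s1 = fst r; out = snd r \<union> settle_out Qs i s1
      in \<sigma>\<lparr>g_loc := (g_loc \<sigma>)(i := settle_st Qs i s1),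
          g_net := g_net \<sigma> \<union> {(i, d, m) | d m. (d, m) \<in> out}\<rparr>)"

datatype ('p,'v) label =
    Propose 'p                          \<comment> \<open>ag-propose at p (arb-broadcasts its input)\<close>
  | ArbDeliver 'p 'p 'v                 \<comment> \<open>receiver, sender, value\<close>
  | Receive 'p 'p "('p,'v) msg"         \<comment> \<open>source, destination, message\<close>
  | ByzReceive 'p 'p "('p,'v) msg"      \<comment> \<open>faulty source sends arbitrary message to destination\<close>
  | Idle

definition ag_step :: "('p \<Rightarrow> 'p set set) \<Rightarrow> 'p set \<Rightarrow> ('p \<Rightarrow> 'v)
    \<Rightarrow> ('p,'v) gstate \<Rightarrow> ('p,'v) label \<Rightarrow> ('p,'v) gstate \<Rightarrow> bool" where
  "ag_step Qs F inp \<sigma> a \<sigma>' = (case a of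
      Propose i \<Rightarrow> i \<notin> F \<and> \<not> ls_prop (g_loc \<sigma> i)
         \<and> \<sigma>' = do_local Qs i \<sigma> ((g_loc \<sigma> i)\<lparr>ls_prop := True\<rparr>, {})
    | ArbDeliver i j x \<Rightarrow> i \<notin> F \<and> (\<forall>y. (j, y) \<notin> ls_S (g_loc \<sigma> i))
         \<and> (j \<notin> F \<longrightarrow> ls_prop (g_loc \<sigma> j) \<and> x = inp j)
         \<and> \<sigma>' = do_local Qs i \<sigma> (arbdel_local j x (g_loc \<sigma> i))
    | Receive j i m \<Rightarrow> i \<notin> F \<and> (j, i, m) \<in> g_net \<sigma>
         \<and> \<sigma>' = do_local Qs i (\<sigma>\<lparr>g_net := g_net \<sigma> - {(j, i, m)}\<rparr>) (recv_local j m (g_loc \<sigma> i))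
    | ByzReceive j i m \<Rightarrow> j \<in> F \<and> i \<notin> F
         \<and> \<sigma>' = do_local Qs i \<sigma> (recv_local j m (g_loc \<sigma> i))
    | Idle \<Rightarrow> \<sigma>' = \<sigma>)"

text \<open>An execution of AG with faulty set F and inputs inp: an infinite run of ag_step from
  the initial state, in which every correct process eventually proposes, every message
  between correct processes is eventually delivered, and the arb-delivery events satisfy
  the asymmetric reliable broadcast specification w.r.t. the maximal guild
  (integrity and at-most-once are enforced by the step relation).\<close>

definition AG_execution :: "('p \<Rightarrow> 'p set set) \<Rightarrow> ('p \<Rightarrow> 'p set set) \<Rightarrow> 'p set \<Rightarrow> ('p \<Rightarrow> 'v)
    \<Rightarrow> (nat \<Rightarrow> ('p,'v) gstate) \<Rightarrow> (nat \<Rightarrow> ('p,'v) label) \<Rightarrow> bool" where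
  "AG_execution Fp Qs F inp \<sigma> lab \<longleftrightarrow>
     \<sigma> 0 = init_g \<and>
     (\<forall>t. ag_step Qs F inp (\<sigma> t) (lab t) (\<sigma> (Suc t))) \<and>
     (\<forall>i. i \<notin> F \<longrightarrow> (\<exists>t. lab t = Propose i)) \<and>
     (\<forall>t j i m. (j, i, m) \<in> g_net (\<sigma> t) \<and> i \<notin> F \<longrightarrow> (\<exists>t'\<ge>t. lab t' = Receive j i m)) \<and>
     (\<forall>j k t. j \<notin> F \<and> ls_prop (g_loc (\<sigma> t) j) \<and> k \<in> Gmax Fp Qs F
        \<longrightarrow> (\<exists>t'. (j, inp j) \<in> ls_S (g_loc (\<sigma> t') k))) \<and>
     (\<forall>j i k t t' x y. i \<in> Gmax Fp Qs F \<and> k \<in> Gmax Fp Qs F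
        \<and> (j, x) \<in> ls_S (g_loc (\<sigma> t) i) \<and> (j, y) \<in> ls_S (g_loc (\<sigma> t') k) \<longrightarrow> x = y) \<and>
     (\<forall>j i t x. i \<in> Gmax Fp Qs F \<and> (j, x) \<in> ls_S (g_loc (\<sigma> t) i)
        \<longrightarrow> (\<forall>k\<in>Gmax Fp Qs F. \<exists>t' y. (j, y) \<in> ls_S (g_loc (\<sigma> t') k)))"

end

theory Submission
  imports Defs
begin



definition le_l :: "('p,'v) lstate \<Rightarrow> ('p,'v) lstate \<Rightarrow> bool" where
  "le_l a b \<longleftrightarrow> ls_S a \<subseteq> ls_S b \<and> ls_T a \<subseteq> ls_T b \<and> ls_U a \<subseteq> ls_U b \<and>
    ls_acks a \<subseteq> ls_acks b \<and> ls_readys a \<subseteq> ls_readys b \<and> ls_confs a \<subseteq> ls_confs b \<and>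
    ls_dts a \<subseteq> ls_dts b \<and> (ls_sentS a \<noteq> None \<longrightarrow> ls_sentS b = ls_sentS a) \<and>
    (ls_sentT a \<longrightarrow> ls_sentT b \<and> ls_T b = ls_T a) \<and> (ls_done5 a \<longrightarrow> ls_done5 b) \<and>
    (ls_done6 a \<longrightarrow> ls_done6 b) \<and> (ls_done7 a \<longrightarrow> ls_done7 b) \<and> (ls_prop a \<longrightarrow> ls_prop b)"

lemma le_l_refl: "le_l a a" by (simp add: le_l_def)
lemma le_l_trans: "le_l a b \<Longrightarrow> le_l b c \<Longrightarrow> le_l a c"
  unfolding le_l_def by (metis (mono_tags) order_trans)

lemma le_settle: "le_l s (settle_st Qs i s)"
  by (auto simp: le_l_def settle_st_def)
lemma le_recv: "le_l s (fst (recv_local j m s))"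
  by (auto simp: le_l_def recv_local_def split: msg.split)
lemma le_arbdel: "le_l s (fst (arbdel_local j x s))"
  by (auto simp: le_l_def arbdel_local_def Let_def)
lemma le_prop: "le_l s (s\<lparr>ls_prop := True\<rparr>)"
  by (auto simp: le_l_def)

lemma do_local_loc: "g_loc (do_local Qs i s r) = (g_loc s)(i := settle_st Qs i (fst r))"
  by (simp add: do_local_def Let_def)
lemma do_local_net: "g_net (do_local Qs i s r) = g_net s \<union> {(i, d, m) | d m. (d, m) \<in> snd r \<union> settle_out Qs i (fst r)}"
  by (simp add: do_local_def Let_def)

lemma step_mono: "ag_step Qs F inp s a s' \<Longrightarrow> le_l (g_loc s k) (g_loc s' k)"
  apply (cases a)
  apply (auto simp: ag_step_def do_local_loc le_l_refl
      intro: le_l_trans[OF le_prop le_settle] le_l_trans[OF le_recv le_settle] le_l_trans[OF le_arbdel le_settle])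
  done




definition linv0 :: "('p \<Rightarrow> 'p set set) \<Rightarrow> 'p \<Rightarrow> ('p,'v) lstate \<Rightarrow> bool" where
  "linv0 Qs i s \<longleftrightarrow> ls_T s \<subseteq> ls_S s \<and> (\<forall>X. ls_sentS s = Some X \<longrightarrow> X \<subseteq> ls_S s) \<and>
     (\<forall>j X. (j,X) \<in> ls_pendT s \<longrightarrow> \<not> X \<subseteq> ls_S s) \<and> (\<forall>j X. (j,X) \<in> ls_pendS s \<longrightarrow> \<not> X \<subseteq> ls_S s) \<and>
     (ls_done5 s \<longrightarrow> covered Qs i (ls_acks s)) \<and> (ls_done6 s \<longrightarrow> covered Qs i (ls_readys s)) \<and>
     (ls_sentT s \<longrightarrow> covered Qs i (ls_confs s)) \<and>
     (ls_done7 s \<longrightarrow> (\<exists>K. is_kernel Qs i K \<and> K \<subseteq> ls_confs s))"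

definition linv :: "('p \<Rightarrow> 'p set set) \<Rightarrow> 'p \<Rightarrow> ('p,'v) lstate \<Rightarrow> bool" where
  "linv Qs i s \<longleftrightarrow> linv0 Qs i s \<and> (s = init_l \<or> settle_st Qs i s = s)"

lemma covered_mono: "covered Qs i A \<Longrightarrow> A \<subseteq> B \<Longrightarrow> covered Qs i B"
  by (auto simp: covered_def)

lemma settle_idem: "settle_st Qs i (settle_st Qs i s) = settle_st Qs i s"
  by (simp add: settle_st_def)

lemma linv0_settle: "linv0 Qs i s \<Longrightarrow> linv0 Qs i (settle_st Qs i s)"
  by (auto simp: linv0_def settle_st_def)

lemma linv_settle: "linv0 Qs i s \<Longrightarrow> linv Qs i (settle_st Qs i s)"
  by (simp add: linv_def linv0_settle settle_idem)

lemma linv_init: "linv Qs i init_l"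
  by (simp add: linv_def linv0_def init_l_def)

lemma linv0_prop: "linv0 Qs i s \<Longrightarrow> linv0 Qs i (s\<lparr>ls_prop := True\<rparr>)"
  by (simp add: linv0_def)

lemma linv0_recv: "linv0 Qs i s \<Longrightarrow> linv0 Qs i (fst (recv_local j m s))"
  by (auto simp: linv0_def recv_local_def split: msg.split elim: covered_mono)

lemma linv0_arbdel: "linv0 Qs i s \<Longrightarrow> linv0 Qs i (fst (arbdel_local j x s))"
  unfolding linv0_def arbdel_local_def Let_def
  apply (simp, intro conjI)
  apply (auto elim!: subset_trans)
  done

lemma linv_step: assumes "ag_step Qs F inp s a s'" "\<forall>k. linv Qs k (g_loc s k)"
  shows "linv Qs k (g_loc s' k)"
proof -
  have h: "\<And>k. linv0 Qs k (g_loc s k)" using assms(2) by (simp add: linv_def)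
  show ?thesis using assms(1)
    by (cases a) (auto simp: ag_step_def do_local_loc
      intro!: linv_settle linv0_prop linv0_recv linv0_arbdel h assms(2)[rule_format])
qed




definition LOC :: "'p set \<Rightarrow> ('p,'v) gstate \<Rightarrow> 'p \<Rightarrow> ('p,'v) lstate \<Rightarrow> ('p \<times> ('p,'v) msg) set \<Rightarrow> bool" where
  "LOC F s i ls1 out0 \<longleftrightarrow>
    (\<forall>j X. (j,X) \<in> ls_pendS ls1 \<longrightarrow> (j,X) \<in> ls_pendS (g_loc s i) \<or> (j,i,DistS X) \<in> g_net s \<or> j \<in> F) \<and>
    (\<forall>j. j \<in> ls_acks ls1 \<longrightarrow> j \<in> ls_acks (g_loc s i) \<or> (j,i,Ack) \<in> g_net s \<or> j \<in> F) \<and>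
    (\<forall>j. j \<in> ls_readys ls1 \<longrightarrow> j \<in> ls_readys (g_loc s i) \<or> (j,i,Ready) \<in> g_net s \<or> j \<in> F) \<and>
    (\<forall>j. j \<in> ls_confs ls1 \<longrightarrow> j \<in> ls_confs (g_loc s i) \<or> (j,i,Confirm) \<in> g_net s \<or> j \<in> F) \<and>
    (\<forall>d mm. (d,mm) \<in> out0 \<longrightarrow> mm = Ack \<and> (\<exists>X. X \<subseteq> ls_T ls1 \<and>
        ((d,X) \<in> ls_pendS (g_loc s i) \<or> (d,i,DistS X) \<in> g_net s \<or> d \<in> F)))"

lemma LOC_arbdel: "LOC F s i (fst (arbdel_local j x (g_loc s i))) (snd (arbdel_local j x (g_loc s i)))"
  by (auto simp: LOC_def arbdel_local_def Let_def)

lemma LOC_recv: "(j,i,m) \<in> g_net s \<or> j \<in> F \<Longrightarrow> LOC F s i (fst (recv_local j m (g_loc s i))) (snd (recv_local j m (g_loc s i)))"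
  by (auto simp: LOC_def recv_local_def split: msg.splits if_splits)

lemma step_facts:
  assumes "ag_step Qs F inp s a s'"
  shows "s' = s \<or> (\<exists>i ls1 out0. i \<notin> F \<and> g_loc s' = (g_loc s)(i := settle_st Qs i ls1) \<and>
     g_net s' \<subseteq> g_net s \<union> {(i,d,m) | d m. (d,m) \<in> out0 \<union> settle_out Qs i ls1} \<and>
     le_l (g_loc s i) ls1 \<and> LOC F s i ls1 out0)"
proof (cases a)
  case (Propose i)
  then show ?thesis using assms
    by (intro disjI2 exI[of _ i] exI[of _ "(g_loc s i)\<lparr>ls_prop := True\<rparr>"] exI[of _ "{}"])
       (auto simp: ag_step_def do_local_loc do_local_net le_prop LOC_def)
next
  case (ArbDeliver i j x)
  then show ?thesis using assms
    by (intro disjI2 exI[of _ i] exI[of _ "fst (arbdel_local j x (g_loc s i))"] exI[of _ "snd (arbdel_local j x (g_loc s i))"])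
       (auto simp: ag_step_def do_local_loc do_local_net le_arbdel LOC_arbdel)
next
  case (Receive j i m)
  then show ?thesis using assms
    by (intro disjI2 exI[of _ i] exI[of _ "fst (recv_local j m (g_loc s i))"] exI[of _ "snd (recv_local j m (g_loc s i))"])
       (auto simp: ag_step_def do_local_loc do_local_net le_recv LOC_recv)
next
  case (ByzReceive j i m)
  then show ?thesis using assms
    by (intro disjI2 exI[of _ i] exI[of _ "fst (recv_local j m (g_loc s i))"] exI[of _ "snd (recv_local j m (g_loc s i))"])
       (auto simp: ag_step_def do_local_loc do_local_net le_recv LOC_recv)
next
  case Idle
  then show ?thesis using assms by (simp add: ag_step_def)
qed




definition ginv :: "'p set \<Rightarrow> ('p,'v) gstate \<Rightarrow> bool" where
  "ginv F s \<longleftrightarrow> (\<forall>j k X. j \<notin> F \<longrightarrow>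
    ((j,k,DistS X) \<in> g_net s \<longrightarrow> ls_sentS (g_loc s j) = Some X) \<and>
    ((j,X) \<in> ls_pendS (g_loc s k) \<longrightarrow> ls_sentS (g_loc s j) = Some X) \<and>
    (k \<notin> F \<and> ((j,k,Ack) \<in> g_net s \<or> j \<in> ls_acks (g_loc s k)) \<longrightarrow>
        (\<exists>Y. ls_sentS (g_loc s k) = Some Y \<and> Y \<subseteq> ls_T (g_loc s j))) \<and>
    (((j,k,Ready) \<in> g_net s \<or> j \<in> ls_readys (g_loc s k)) \<longrightarrow> ls_done5 (g_loc s j)) \<and>
    (((j,k,Confirm) \<in> g_net s \<or> j \<in> ls_confs (g_loc s k)) \<longrightarrow> ls_done6 (g_loc s j) \<or> ls_done7 (g_loc s j)))"

lemma settle_out_facts: "(d,mm) \<in> settle_out Qs i ls1 \<Longrightarrow>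
   (\<forall>X. mm = DistS X \<longrightarrow> ls_sentS (settle_st Qs i ls1) = Some X) \<and> mm \<noteq> Ack \<and>
   (mm = Ready \<longrightarrow> ls_done5 (settle_st Qs i ls1)) \<and>
   (mm = Confirm \<longrightarrow> ls_done6 (settle_st Qs i ls1) \<or> ls_done7 (settle_st Qs i ls1))"
  by (auto simp: settle_out_def settle_st_def to_all_def split: if_splits)

lemma settle_sel[simp]: "ls_pendS (settle_st Qs i s) = ls_pendS s" "ls_acks (settle_st Qs i s) = ls_acks s"
  "ls_readys (settle_st Qs i s) = ls_readys s" "ls_confs (settle_st Qs i s) = ls_confs s"
  "ls_T (settle_st Qs i s) = ls_T s" "ls_S (settle_st Qs i s) = ls_S s" "ls_U (settle_st Qs i s) = ls_U s"
  "ls_pendT (settle_st Qs i s) = ls_pendT s" "ls_dts (settle_st Qs i s) = ls_dts s"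
  by (simp_all add: settle_st_def)

lemma ginv_init: "ginv F init_g"
  by (simp add: ginv_def init_g_def init_l_def)

lemma le_sentS: "le_l a b \<Longrightarrow> ls_sentS a = Some X \<Longrightarrow> ls_sentS b = Some X"
  by (auto simp: le_l_def)
lemma le_T: "le_l a b \<Longrightarrow> ls_T a \<subseteq> ls_T b" by (simp add: le_l_def)
lemma le_d5: "le_l a b \<Longrightarrow> ls_done5 a \<Longrightarrow> ls_done5 b" by (simp add: le_l_def)
lemma le_d67: "le_l a b \<Longrightarrow> ls_done6 a \<or> ls_done7 a \<Longrightarrow> ls_done6 b \<or> ls_done7 b" by (auto simp: le_l_def)

lemma ginv_step:
  assumes st: "ag_step Qs F inp s a s'" and inv: "ginv F s"
  shows "ginv F s'"
proof -
  have mono: "\<And>x. le_l (g_loc s x) (g_loc s' x)" using st by (rule step_mono)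
  have I1: "\<And>j k X. j \<notin> F \<Longrightarrow> (j,k,DistS X) \<in> g_net s \<Longrightarrow> ls_sentS (g_loc s j) = Some X"
    using inv unfolding ginv_def by blast
  have I2: "\<And>j k X. j \<notin> F \<Longrightarrow> (j,X) \<in> ls_pendS (g_loc s k) \<Longrightarrow> ls_sentS (g_loc s j) = Some X"
    using inv unfolding ginv_def by blast
  have I3: "\<And>j k. j \<notin> F \<Longrightarrow> k \<notin> F \<Longrightarrow> (j,k,Ack) \<in> g_net s \<or> j \<in> ls_acks (g_loc s k) \<Longrightarrow>
        \<exists>Y. ls_sentS (g_loc s k) = Some Y \<and> Y \<subseteq> ls_T (g_loc s j)"
    using inv unfolding ginv_def by blast
  have I4: "\<And>j k. j \<notin> F \<Longrightarrow> (j,k,Ready) \<in> g_net s \<or> j \<in> ls_readys (g_loc s k) \<Longrightarrow> ls_done5 (g_loc s j)"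
    using inv unfolding ginv_def by blast
  have I5: "\<And>j k. j \<notin> F \<Longrightarrow> (j,k,Confirm) \<in> g_net s \<or> j \<in> ls_confs (g_loc s k) \<Longrightarrow> ls_done6 (g_loc s j) \<or> ls_done7 (g_loc s j)"
    using inv unfolding ginv_def by blast
  consider "s' = s" | i ls1 out0 where "i \<notin> F" "g_loc s' = (g_loc s)(i := settle_st Qs i ls1)"
     "g_net s' \<subseteq> g_net s \<union> {(i,d,m) | d m. (d,m) \<in> out0 \<union> settle_out Qs i ls1}"
     "le_l (g_loc s i) ls1" "LOC F s i ls1 out0"
    using step_facts[OF st] by blast
  then show ?thesis
  proof cases
    case 1 then show ?thesis using inv by simp
  next
    case 2
    have L'i: "g_loc s' i = settle_st Qs i ls1" using 2 by simp
    have L'x: "\<And>x. x \<noteq> i \<Longrightarrow> g_loc s' x = g_loc s x" using 2 by simp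
    have net: "\<And>j k m. (j,k,m) \<in> g_net s' \<Longrightarrow> (j,k,m) \<in> g_net s \<or> (j = i \<and> (k,m) \<in> out0) \<or> (j = i \<and> (k,m) \<in> settle_out Qs i ls1)"
      using 2(3) by blast
    have lp: "\<And>j X. (j,X) \<in> ls_pendS ls1 \<Longrightarrow> (j,X) \<in> ls_pendS (g_loc s i) \<or> (j,i,DistS X) \<in> g_net s \<or> j \<in> F"
      using 2(5) unfolding LOC_def by blast
    have la: "\<And>j. j \<in> ls_acks ls1 \<Longrightarrow> j \<in> ls_acks (g_loc s i) \<or> (j,i,Ack) \<in> g_net s \<or> j \<in> F"
      using 2(5) unfolding LOC_def by blast
    have lr: "\<And>j. j \<in> ls_readys ls1 \<Longrightarrow> j \<in> ls_readys (g_loc s i) \<or> (j,i,Ready) \<in> g_net s \<or> j \<in> F"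
      using 2(5) unfolding LOC_def by blast
    have lc: "\<And>j. j \<in> ls_confs ls1 \<Longrightarrow> j \<in> ls_confs (g_loc s i) \<or> (j,i,Confirm) \<in> g_net s \<or> j \<in> F"
      using 2(5) unfolding LOC_def by blast
    have lo: "\<And>d mm. (d,mm) \<in> out0 \<Longrightarrow> mm = Ack \<and> (\<exists>X. X \<subseteq> ls_T ls1 \<and>
        ((d,X) \<in> ls_pendS (g_loc s i) \<or> (d,i,DistS X) \<in> g_net s \<or> d \<in> F))"
      using 2(5) unfolding LOC_def by blast
    show ?thesis unfolding ginv_def
    proof (intro allI impI conjI)
      fix j k X assume j: "j \<notin> F"
      show "(j,k,DistS X) \<in> g_net s' \<Longrightarrow> ls_sentS (g_loc s' j) = Some X"
      proof -
        assume "(j,k,DistS X) \<in> g_net s'"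
        then consider "(j,k,DistS X) \<in> g_net s" | "j = i" "(k,DistS X) \<in> out0" | "j = i" "(k,DistS X) \<in> settle_out Qs i ls1"
          using net by blast
        then show ?thesis
        proof cases
          case 1 then show ?thesis using I1[OF j] mono le_sentS by blast
        next
          case 2 then show ?thesis using lo by blast
        next
          case 3 then show ?thesis using settle_out_facts[OF 3(2)] L'i by simp
        qed
      qed
      show "(j,X) \<in> ls_pendS (g_loc s' k) \<Longrightarrow> ls_sentS (g_loc s' j) = Some X"
      proof -
        assume a: "(j,X) \<in> ls_pendS (g_loc s' k)"
        have "ls_sentS (g_loc s j) = Some X"
        proof (cases "k = i")
          case True
          then have "(j,X) \<in> ls_pendS ls1" using a L'i by simp
          then show ?thesis using lp j I1[OF j] I2[OF j] by blast
        next
          case False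
          then show ?thesis using a L'x I2[OF j] by simp
        qed
        then show ?thesis using mono le_sentS by blast
      qed
      show "k \<notin> F \<and> ((j,k,Ack) \<in> g_net s' \<or> j \<in> ls_acks (g_loc s' k)) \<Longrightarrow>
        \<exists>Y. ls_sentS (g_loc s' k) = Some Y \<and> Y \<subseteq> ls_T (g_loc s' j)"
      proof -
        assume a: "k \<notin> F \<and> ((j,k,Ack) \<in> g_net s' \<or> j \<in> ls_acks (g_loc s' k))"
        have k: "k \<notin> F" using a by blast
        have "\<exists>Y. ls_sentS (g_loc s k) = Some Y \<and> Y \<subseteq> ls_T (g_loc s' j)"
        proof -
          { assume "(j,k,Ack) \<in> g_net s'"
            then consider "(j,k,Ack) \<in> g_net s" | "j = i" "(k,Ack) \<in> out0" | "j = i" "(k,Ack) \<in> settle_out Qs i ls1"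
              using net by blast
            then have ?thesis
            proof cases
              case 1 then show ?thesis using I3[OF j k] mono[of j] le_T by blast
            next
              case 2
              then obtain Y where Y: "Y \<subseteq> ls_T ls1" "(k,Y) \<in> ls_pendS (g_loc s i) \<or> (k,i,DistS Y) \<in> g_net s \<or> k \<in> F"
                using lo by blast
              have "ls_sentS (g_loc s k) = Some Y" using Y(2) k I1[OF k] I2[OF k] by blast
              moreover have "Y \<subseteq> ls_T (g_loc s' j)" using Y(1) 2 L'i by simp
              ultimately show ?thesis by blast
            next
              case 3 then show ?thesis using settle_out_facts[OF 3(2)] by simp
            qed }
          moreover
          { assume b: "j \<in> ls_acks (g_loc s' k)"
            have "j \<in> ls_acks (g_loc s k) \<or> (j,k,Ack) \<in> g_net s"
            proof (cases "k = i")
              case True then show ?thesis using b L'i la[of j] j by simp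
            next
              case False then show ?thesis using b L'x by simp
            qed
            then have ?thesis using I3[OF j k] mono[of j] le_T by blast }
          ultimately show ?thesis using a by blast
        qed
        then show ?thesis using mono[of k] le_sentS by blast
      qed
      show "(j,k,Ready) \<in> g_net s' \<or> j \<in> ls_readys (g_loc s' k) \<Longrightarrow> ls_done5 (g_loc s' j)"
      proof -
        assume a: "(j,k,Ready) \<in> g_net s' \<or> j \<in> ls_readys (g_loc s' k)"
        have "ls_done5 (g_loc s j) \<or> (j = i \<and> ls_done5 (settle_st Qs i ls1))"
        proof -
          { assume "(j,k,Ready) \<in> g_net s'"
            then consider "(j,k,Ready) \<in> g_net s" | "j = i" "(k,Ready) \<in> out0" | "j = i" "(k,Ready) \<in> settle_out Qs i ls1"
              using net by blast
            then have ?thesis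
            proof cases
              case 1 then show ?thesis using I4[OF j] by blast
            next
              case 2 then show ?thesis using lo by blast
            next
              case 3 then show ?thesis using settle_out_facts[OF 3(2)] by simp
            qed }
          moreover
          { assume b: "j \<in> ls_readys (g_loc s' k)"
            have "j \<in> ls_readys (g_loc s k) \<or> (j,k,Ready) \<in> g_net s"
            proof (cases "k = i")
              case True then show ?thesis using b L'i lr[of j] j by simp
            next
              case False then show ?thesis using b L'x by simp
            qed
            then have ?thesis using I4[OF j] by blast }
          ultimately show ?thesis using a by blast
        qed
        then show ?thesis using mono[of j] le_d5 L'i by metis
      qed
      show "(j,k,Confirm) \<in> g_net s' \<or> j \<in> ls_confs (g_loc s' k) \<Longrightarrow> ls_done6 (g_loc s' j) \<or> ls_done7 (g_loc s' j)"
      proof -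
        assume a: "(j,k,Confirm) \<in> g_net s' \<or> j \<in> ls_confs (g_loc s' k)"
        have "ls_done6 (g_loc s j) \<or> ls_done7 (g_loc s j) \<or> (j = i \<and> (ls_done6 (settle_st Qs i ls1) \<or> ls_done7 (settle_st Qs i ls1)))"
        proof -
          { assume "(j,k,Confirm) \<in> g_net s'"
            then consider "(j,k,Confirm) \<in> g_net s" | "j = i" "(k,Confirm) \<in> out0" | "j = i" "(k,Confirm) \<in> settle_out Qs i ls1"
              using net by blast
            then have ?thesis
            proof cases
              case 1 then show ?thesis using I5[OF j] by blast
            next
              case 2 then show ?thesis using lo by blast
            next
              case 3 then show ?thesis using settle_out_facts[OF 3(2)] by simp
            qed }
          moreover
          { assume b: "j \<in> ls_confs (g_loc s' k)"
            have "j \<in> ls_confs (g_loc s k) \<or> (j,k,Confirm) \<in> g_net s"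
            proof (cases "k = i")
              case True then show ?thesis using b L'i lc[of j] j by simp
            next
              case False then show ?thesis using b L'x by simp
            qed
            then have ?thesis using I5[OF j] by blast }
          ultimately show ?thesis using a by blast
        qed
        then show ?thesis using mono[of j] le_d67 L'i by metis
      qed
    qed
  qed
qed





definition PT :: "('p,'v) lstate \<Rightarrow> ('p,'v) lstate \<Rightarrow> bool" where
  "PT ls ls1 \<longleftrightarrow> (\<forall>j X. (j,X) \<in> ls_pendT ls \<longrightarrow> (j,X) \<in> ls_pendT ls1 \<or> X \<subseteq> ls_U ls1)"
definition PS :: "('p,'v) lstate \<Rightarrow> ('p,'v) lstate \<Rightarrow> ('p \<times> ('p,'v) msg) set \<Rightarrow> bool" where
  "PS ls ls1 out0 \<longleftrightarrow> (\<not> ls_sentT ls \<longrightarrow> (\<forall>j X. (j,X) \<in> ls_pendS ls \<longrightarrow> (j,X) \<in> ls_pendS ls1 \<or> (j,Ack) \<in> out0))"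
definition FL :: "('p,'v) lstate \<Rightarrow> ('p,'v) lstate \<Rightarrow> bool" where
  "FL ls ls1 \<longleftrightarrow> ls_sentS ls1 = ls_sentS ls \<and> ls_done5 ls1 = ls_done5 ls \<and> ls_done6 ls1 = ls_done6 ls \<and>
     ls_done7 ls1 = ls_done7 ls \<and> ls_sentT ls1 = ls_sentT ls"

lemma step_facts2:
  assumes "ag_step Qs F inp s a s'"
  shows "s' = s \<or> (\<exists>i ls1 out0. i \<notin> F \<and> g_loc s' = (g_loc s)(i := settle_st Qs i ls1) \<and>
     {(i,d,m) | d m. (d,m) \<in> out0 \<union> settle_out Qs i ls1} \<subseteq> g_net s' \<and>
     le_l (g_loc s i) ls1 \<and> FL (g_loc s i) ls1 \<and> PT (g_loc s i) ls1 \<and> PS (g_loc s i) ls1 out0)"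
proof (cases a)
  case (Propose i)
  then show ?thesis using assms
    by (intro disjI2 exI[of _ i] exI[of _ "(g_loc s i)\<lparr>ls_prop := True\<rparr>"] exI[of _ "{}"])
       (auto simp: ag_step_def do_local_loc do_local_net le_prop FL_def PT_def PS_def)
next
  case (ArbDeliver i j x)
  have "FL (g_loc s i) (fst (arbdel_local j x (g_loc s i))) \<and> PT (g_loc s i) (fst (arbdel_local j x (g_loc s i)))
     \<and> PS (g_loc s i) (fst (arbdel_local j x (g_loc s i))) (snd (arbdel_local j x (g_loc s i)))"
    by (auto simp: FL_def PT_def PS_def arbdel_local_def Let_def) (metis (mono_tags, lifting) fst_conv image_eqI mem_Collect_eq snd_conv)
  then show ?thesis using assms ArbDeliver
    by (intro disjI2 exI[of _ i] exI[of _ "fst (arbdel_local j x (g_loc s i))"] exI[of _ "snd (arbdel_local j x (g_loc s i))"])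
       (auto simp: ag_step_def do_local_loc do_local_net le_arbdel)
next
  case (Receive j i m)
  have "FL (g_loc s i) (fst (recv_local j m (g_loc s i))) \<and> PT (g_loc s i) (fst (recv_local j m (g_loc s i)))
     \<and> PS (g_loc s i) (fst (recv_local j m (g_loc s i))) (snd (recv_local j m (g_loc s i)))"
    by (auto simp: FL_def PT_def PS_def recv_local_def split: msg.splits)
  then show ?thesis using assms Receive
    by (intro disjI2 exI[of _ i] exI[of _ "fst (recv_local j m (g_loc s i))"] exI[of _ "snd (recv_local j m (g_loc s i))"])
       (auto simp: ag_step_def do_local_loc do_local_net le_recv)
next
  case (ByzReceive j i m)
  have "FL (g_loc s i) (fst (recv_local j m (g_loc s i))) \<and> PT (g_loc s i) (fst (recv_local j m (g_loc s i)))
     \<and> PS (g_loc s i) (fst (recv_local j m (g_loc s i))) (snd (recv_local j m (g_loc s i)))"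
    by (auto simp: FL_def PT_def PS_def recv_local_def split: msg.splits)
  then show ?thesis using assms ByzReceive
    by (intro disjI2 exI[of _ i] exI[of _ "fst (recv_local j m (g_loc s i))"] exI[of _ "snd (recv_local j m (g_loc s i))"])
       (auto simp: ag_step_def do_local_loc do_local_net le_recv)
next
  case Idle
  then show ?thesis using assms by (simp add: ag_step_def)
qed

lemma settle_out_DistS: "ls_sentS s = None \<Longrightarrow> ls_sentS (settle_st Qs i s) = Some X \<Longrightarrow>
   X = ls_S s \<and> (d, DistS X) \<in> settle_out Qs i s"
  by (auto simp: settle_st_def settle_out_def to_all_def split: if_splits)
lemma settle_out_Ready: "\<not> ls_done5 s \<Longrightarrow> ls_done5 (settle_st Qs i s) \<Longrightarrow> (d, Ready) \<in> settle_out Qs i s"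
  by (auto simp: settle_st_def settle_out_def to_all_def split: if_splits)
lemma settle_out_Confirm: "\<not> (ls_done6 s \<or> ls_done7 s) \<Longrightarrow> ls_done6 (settle_st Qs i s) \<or> ls_done7 (settle_st Qs i s) \<Longrightarrow> (d, Confirm) \<in> settle_out Qs i s"
  by (auto simp: settle_st_def settle_out_def to_all_def split: if_splits)
lemma settle_out_DistT: "\<not> ls_sentT s \<Longrightarrow> ls_sentT (settle_st Qs i s) \<Longrightarrow> (d, DistT (ls_T s)) \<in> settle_out Qs i s"
  by (auto simp: settle_st_def settle_out_def to_all_def split: if_splits)




locale agx =
  fixes Fp Qs :: "'p::finite \<Rightarrow> 'p set set" and F :: "'p set" and inp :: "'p \<Rightarrow> 'v"
    and \<sigma> :: "nat \<Rightarrow> ('p,'v) gstate" and lab :: "nat \<Rightarrow> ('p,'v) label"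
  assumes qs: "asym_quorum_system Fp Qs" and ex: "AG_execution Fp Qs F inp \<sigma> lab"
    and gu: "exec_with_guild Fp Qs F"
begin

abbreviation L where "L t k \<equiv> g_loc (\<sigma> t) k"
abbreviation N where "N t \<equiv> g_net (\<sigma> t)"
abbreviation G where "G \<equiv> Gmax Fp Qs F"

lemma step: "ag_step Qs F inp (\<sigma> t) (lab t) (\<sigma> (Suc t))" using ex by (simp add: AG_execution_def)
lemma sigma0: "\<sigma> 0 = init_g" using ex by (simp add: AG_execution_def)
lemma L0: "L 0 k = init_l" by (simp add: sigma0 init_g_def)

lemma mono_t: "t \<le> t' \<Longrightarrow> le_l (L t k) (L t' k)"
proof (induction t' rule: dec_induct)
  case base then show ?case by (rule le_l_refl)
next
  case (step n) then show ?case using le_l_trans step_mono[OF agx.step[OF agx_axioms, of n]] by blast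
qed

lemma linv_t: "linv Qs k (L t k)"
proof (induction t arbitrary: k)
  case 0 then show ?case by (simp add: L0 linv_init)
next
  case (Suc t) then show ?case using linv_step[OF step[of t]] by blast
qed

lemma ginv_t: "ginv F (\<sigma> t)"
proof (induction t)
  case 0 then show ?case by (simp add: sigma0 ginv_init)
next
  case (Suc t) then show ?case using ginv_step[OF step[of t]] by blast
qed

lemma step_j: "L (Suc t) j = L t j \<or> (\<exists>ls1 out0. j \<notin> F \<and> L (Suc t) j = settle_st Qs j ls1 \<and>
     {(j,d,m) | d m. (d,m) \<in> out0 \<union> settle_out Qs j ls1} \<subseteq> N (Suc t) \<and>
     le_l (L t j) ls1 \<and> FL (L t j) ls1 \<and> PT (L t j) ls1 \<and> PS (L t j) ls1 out0)"
proof -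
  from step_facts2[OF step[of t]] show ?thesis
  proof
    assume "\<sigma> (Suc t) = \<sigma> t" then show ?thesis by simp
  next
    assume "\<exists>i ls1 out0. i \<notin> F \<and> g_loc (\<sigma> (Suc t)) = (g_loc (\<sigma> t))(i := settle_st Qs i ls1) \<and>
     {(i,d,m) | d m. (d,m) \<in> out0 \<union> settle_out Qs i ls1} \<subseteq> g_net (\<sigma> (Suc t)) \<and>
     le_l (g_loc (\<sigma> t) i) ls1 \<and> FL (g_loc (\<sigma> t) i) ls1 \<and> PT (g_loc (\<sigma> t) i) ls1 \<and> PS (g_loc (\<sigma> t) i) ls1 out0"
    then obtain i ls1 out0 where h: "i \<notin> F" "g_loc (\<sigma> (Suc t)) = (g_loc (\<sigma> t))(i := settle_st Qs i ls1)"
     "{(i,d,m) | d m. (d,m) \<in> out0 \<union> settle_out Qs i ls1} \<subseteq> g_net (\<sigma> (Suc t))"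
     "le_l (g_loc (\<sigma> t) i) ls1" "FL (g_loc (\<sigma> t) i) ls1" "PT (g_loc (\<sigma> t) i) ls1" "PS (g_loc (\<sigma> t) i) ls1 out0"
      by blast
    show ?thesis
    proof (cases "j = i")
      case True then show ?thesis using h by auto
    next
      case False then show ?thesis using h by auto
    qed
  qed
qed

lemma H_DistS: "ls_sentS (L t j) = Some X \<Longrightarrow> \<exists>t0. (j,k,DistS X) \<in> N t0"
proof (induction t)
  case 0 then show ?case by (simp add: L0 init_l_def)
next
  case (Suc t)
  show ?case
  proof (cases "ls_sentS (L t j) = None")
    case False
    then have "ls_sentS (L (Suc t) j) = ls_sentS (L t j)" using step_mono[OF step, of t j] by (auto simp: le_l_def)
    then show ?thesis using Suc by auto
  next
    case True
    from step_j[of t j] show ?thesis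
    proof
      assume "L (Suc t) j = L t j" then show ?thesis using True Suc.prems by simp
    next
      assume "\<exists>ls1 out0. j \<notin> F \<and> L (Suc t) j = settle_st Qs j ls1 \<and>
       {(j,d,m) | d m. (d,m) \<in> out0 \<union> settle_out Qs j ls1} \<subseteq> N (Suc t) \<and>
       le_l (L t j) ls1 \<and> FL (L t j) ls1 \<and> PT (L t j) ls1 \<and> PS (L t j) ls1 out0"
      then obtain ls1 out0 where h: "L (Suc t) j = settle_st Qs j ls1"
        "{(j,d,m) | d m. (d,m) \<in> out0 \<union> settle_out Qs j ls1} \<subseteq> N (Suc t)" "FL (L t j) ls1" by blast
      have "ls_sentS ls1 = None" using h(3) True by (simp add: FL_def)
      then have "(k, DistS X) \<in> settle_out Qs j ls1" using settle_out_DistS Suc.prems h(1) by metis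
      then show ?thesis using h(2) by blast
    qed
  qed
qed

lemma H_Ready: "ls_done5 (L t j) \<Longrightarrow> \<exists>t0. (j,k,Ready) \<in> N t0"
proof (induction t)
  case 0 then show ?case by (simp add: L0 init_l_def)
next
  case (Suc t)
  show ?case
  proof (cases "ls_done5 (L t j)")
    case True then show ?thesis using Suc by auto
  next
    case False
    from step_j[of t j] show ?thesis
    proof
      assume "L (Suc t) j = L t j" then show ?thesis using False Suc.prems by simp
    next
      assume "\<exists>ls1 out0. j \<notin> F \<and> L (Suc t) j = settle_st Qs j ls1 \<and>
       {(j,d,m) | d m. (d,m) \<in> out0 \<union> settle_out Qs j ls1} \<subseteq> N (Suc t) \<and>
       le_l (L t j) ls1 \<and> FL (L t j) ls1 \<and> PT (L t j) ls1 \<and> PS (L t j) ls1 out0"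
      then obtain ls1 out0 where h: "L (Suc t) j = settle_st Qs j ls1"
        "{(j,d,m) | d m. (d,m) \<in> out0 \<union> settle_out Qs j ls1} \<subseteq> N (Suc t)" "FL (L t j) ls1" by blast
      have "\<not> ls_done5 ls1" using h(3) False by (simp add: FL_def)
      then have "(k, Ready) \<in> settle_out Qs j ls1" using settle_out_Ready Suc.prems h(1) by metis
      then show ?thesis using h(2) by blast
    qed
  qed
qed

lemma H_Confirm: "ls_done6 (L t j) \<or> ls_done7 (L t j) \<Longrightarrow> \<exists>t0. (j,k,Confirm) \<in> N t0"
proof (induction t)
  case 0 then show ?case by (simp add: L0 init_l_def)
next
  case (Suc t)
  show ?case
  proof (cases "ls_done6 (L t j) \<or> ls_done7 (L t j)")
    case True then show ?thesis using Suc by auto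
  next
    case False
    from step_j[of t j] show ?thesis
    proof
      assume "L (Suc t) j = L t j" then show ?thesis using False Suc.prems by simp
    next
      assume "\<exists>ls1 out0. j \<notin> F \<and> L (Suc t) j = settle_st Qs j ls1 \<and>
       {(j,d,m) | d m. (d,m) \<in> out0 \<union> settle_out Qs j ls1} \<subseteq> N (Suc t) \<and>
       le_l (L t j) ls1 \<and> FL (L t j) ls1 \<and> PT (L t j) ls1 \<and> PS (L t j) ls1 out0"
      then obtain ls1 out0 where h: "L (Suc t) j = settle_st Qs j ls1"
        "{(j,d,m) | d m. (d,m) \<in> out0 \<union> settle_out Qs j ls1} \<subseteq> N (Suc t)" "FL (L t j) ls1" by blast
      have "\<not> (ls_done6 ls1 \<or> ls_done7 ls1)" using h(3) False by (simp add: FL_def)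
      then have "(k, Confirm) \<in> settle_out Qs j ls1" using settle_out_Confirm Suc.prems h(1) by metis
      then show ?thesis using h(2) by blast
    qed
  qed
qed

lemma H_DistT: "ls_sentT (L t j) \<Longrightarrow> \<exists>t0. (j,k,DistT (ls_T (L t j))) \<in> N t0"
proof (induction t)
  case 0 then show ?case by (simp add: L0 init_l_def)
next
  case (Suc t)
  show ?case
  proof (cases "ls_sentT (L t j)")
    case True
    then have "ls_T (L (Suc t) j) = ls_T (L t j)" using step_mono[OF step, of t j] by (auto simp: le_l_def)
    then show ?thesis using Suc True by auto
  next
    case False
    from step_j[of t j] show ?thesis
    proof
      assume "L (Suc t) j = L t j" then show ?thesis using False Suc.prems by simp
    next
      assume "\<exists>ls1 out0. j \<notin> F \<and> L (Suc t) j = settle_st Qs j ls1 \<and>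
       {(j,d,m) | d m. (d,m) \<in> out0 \<union> settle_out Qs j ls1} \<subseteq> N (Suc t) \<and>
       le_l (L t j) ls1 \<and> FL (L t j) ls1 \<and> PT (L t j) ls1 \<and> PS (L t j) ls1 out0"
      then obtain ls1 out0 where h: "L (Suc t) j = settle_st Qs j ls1"
        "{(j,d,m) | d m. (d,m) \<in> out0 \<union> settle_out Qs j ls1} \<subseteq> N (Suc t)" "FL (L t j) ls1" by blast
      have "\<not> ls_sentT ls1" using h(3) False by (simp add: FL_def)
      then have "(k, DistT (ls_T ls1)) \<in> settle_out Qs j ls1" using settle_out_DistT Suc.prems h(1) by metis
      moreover have "ls_T (L (Suc t) j) = ls_T ls1" using h(1) by simp
      ultimately have "(j, k, DistT (ls_T (L (Suc t) j))) \<in> N (Suc t)" using h(2) by auto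
      then show ?thesis by blast
    qed
  qed
qed

lemma H_conf_time: "j \<notin> F \<Longrightarrow> j \<in> ls_confs (L t k) \<Longrightarrow> \<exists>t0<t. (j,k,Confirm) \<in> N t0"
proof (induction t)
  case 0 then show ?case by (simp add: L0 init_l_def)
next
  case (Suc t)
  show ?case
  proof (cases "j \<in> ls_confs (L t k)")
    case True then show ?thesis using Suc by (meson less_Suc_eq)
  next
    case False
    from step_facts[OF step[of t]] show ?thesis
    proof
      assume "\<sigma> (Suc t) = \<sigma> t" then show ?thesis using False Suc.prems by simp
    next
      assume "\<exists>i ls1 out0. i \<notin> F \<and> g_loc (\<sigma> (Suc t)) = (g_loc (\<sigma> t))(i := settle_st Qs i ls1) \<and>
       g_net (\<sigma> (Suc t)) \<subseteq> g_net (\<sigma> t) \<union> {(i,d,m) | d m. (d,m) \<in> out0 \<union> settle_out Qs i ls1} \<and>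
       le_l (g_loc (\<sigma> t) i) ls1 \<and> LOC F (\<sigma> t) i ls1 out0"
      then obtain i ls1 out0 where h: "g_loc (\<sigma> (Suc t)) = (g_loc (\<sigma> t))(i := settle_st Qs i ls1)"
        "LOC F (\<sigma> t) i ls1 out0" by blast
      have ki: "k = i" using h(1) False Suc.prems by (cases "k = i") auto
      have "j \<in> ls_confs ls1" using h(1) ki Suc.prems by simp
      then have "(j,k,Confirm) \<in> N t" using h(2) ki False Suc.prems(1) unfolding LOC_def by blast
      then show ?thesis by blast
    qed
  qed
qed

end



lemma settle_prop[simp]: "ls_prop (settle_st Qs i s) = ls_prop s" by (simp add: settle_st_def)

lemma fix_S: "settle_st Qs k s = s \<Longrightarrow> covered Qs k (fst ` ls_S s) \<Longrightarrow> ls_sentS s \<noteq> None"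
proof -
  assume a: "settle_st Qs k s = s" "covered Qs k (fst ` ls_S s)"
  have "ls_sentS (settle_st Qs k s) = ls_sentS s" using a(1) by simp
  then show ?thesis using a(2) by (auto simp: settle_st_def split: if_splits)
qed
lemma fix_5: "settle_st Qs k s = s \<Longrightarrow> covered Qs k (ls_acks s) \<Longrightarrow> ls_done5 s"
proof -
  assume a: "settle_st Qs k s = s" "covered Qs k (ls_acks s)"
  have "ls_done5 (settle_st Qs k s) = ls_done5 s" using a(1) by simp
  then show ?thesis using a(2) by (auto simp: settle_st_def)
qed
lemma fix_6: "settle_st Qs k s = s \<Longrightarrow> covered Qs k (ls_readys s) \<Longrightarrow> ls_done6 s"
proof -
  assume a: "settle_st Qs k s = s" "covered Qs k (ls_readys s)"
  have "ls_done6 (settle_st Qs k s) = ls_done6 s" using a(1) by simp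
  then show ?thesis using a(2) by (auto simp: settle_st_def)
qed
lemma fix_7: "settle_st Qs k s = s \<Longrightarrow> is_kernel Qs k K \<Longrightarrow> K \<subseteq> ls_confs s \<Longrightarrow> ls_done7 s"
proof -
  assume a: "settle_st Qs k s = s" "is_kernel Qs k K" "K \<subseteq> ls_confs s"
  have "ls_done7 (settle_st Qs k s) = ls_done7 s" using a(1) by simp
  then show ?thesis using a(2,3) by (auto simp: settle_st_def)
qed
lemma fix_T: "settle_st Qs k s = s \<Longrightarrow> covered Qs k (ls_confs s) \<Longrightarrow> ls_sentT s"
proof -
  assume a: "settle_st Qs k s = s" "covered Qs k (ls_confs s)"
  have "ls_sentT (settle_st Qs k s) = ls_sentT s" using a(1) by simp
  then show ?thesis using a(2) by (auto simp: settle_st_def)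
qed

context agx begin

lemma qi: "wise Fp F a \<Longrightarrow> wise Fp F b \<Longrightarrow> Q \<in> Qs a \<Longrightarrow> Q' \<in> Qs b \<Longrightarrow> \<exists>p\<in>Q\<inter>Q'. p \<notin> F"
proof -
  assume a: "wise Fp F a" "wise Fp F b" "Q \<in> Qs a" "Q' \<in> Qs b"
  have "F \<in> dstar (Fp a) \<inter> dstar (Fp b)" using a(1,2) by (simp add: wise_def)
  then have "\<not> Q \<inter> Q' \<subseteq> F" using qs a(3,4) unfolding asym_quorum_system_def by blast
  then show ?thesis by blast
qed

lemma G_prop: "k \<in> G \<Longrightarrow> wise Fp F k \<and> (\<exists>Q\<in>Qs k. Q \<subseteq> G)"
proof -
  assume "k \<in> G"
  then obtain G0 where g: "guild Fp Qs F G0" "k \<in> G0" unfolding Gmax_def by blast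
  have sub: "G0 \<subseteq> G" using g(1) unfolding Gmax_def by blast
  have "wise Fp F k" using g unfolding guild_def by blast
  moreover obtain Q where "Q \<in> Qs k" "Q \<subseteq> G0" using g unfolding guild_def by blast
  ultimately show ?thesis using sub by blast
qed

lemma G_nF: "k \<in> G \<Longrightarrow> k \<notin> F" using G_prop by (simp add: wise_def)

lemma G_ne: "G \<noteq> {}" using gu unfolding exec_with_guild_def Gmax_def by blast

lemma Q_ne: "k \<in> G \<Longrightarrow> Q \<in> Qs k \<Longrightarrow> Q \<noteq> {}"
proof -
  assume a: "k \<in> G" "Q \<in> Qs k"
  have "wise Fp F k" using G_prop[OF a(1)] by blast
  then obtain p where "p \<in> Q \<inter> Q" using qi[of k k Q Q] a(2) by blast
  then show ?thesis by blast
qed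

lemma kernel: "wise Fp F x \<Longrightarrow> Q \<in> Qs x \<Longrightarrow> k \<in> G \<Longrightarrow> is_kernel Qs k (Q - F)"
proof -
  assume a: "wise Fp F x" "Q \<in> Qs x" "k \<in> G"
  have w: "wise Fp F k" using G_prop[OF a(3)] by blast
  show ?thesis unfolding is_kernel_def
  proof
    fix Q' assume "Q' \<in> Qs k"
    then obtain p where "p \<in> Q \<inter> Q'" "p \<notin> F" using qi[OF a(1) w a(2)] by blast
    then show "(Q - F) \<inter> Q' \<noteq> {}" by blast
  qed
qed

lemma settled: "L t k = init_l \<or> settle_st Qs k (L t k) = L t k"
  using linv_t[of k t] by (simp add: linv_def)

lemma trig_S: "k \<in> G \<Longrightarrow> Q \<in> Qs k \<Longrightarrow> Q \<subseteq> fst ` ls_S (L t k) \<Longrightarrow> ls_sentS (L t k) \<noteq> None"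
proof -
  assume a: "k \<in> G" "Q \<in> Qs k" "Q \<subseteq> fst ` ls_S (L t k)"
  have "L t k \<noteq> init_l" using a Q_ne by (auto simp: init_l_def)
  then show ?thesis using settled fix_S a by (metis covered_def)
qed
lemma trig_5: "k \<in> G \<Longrightarrow> Q \<in> Qs k \<Longrightarrow> Q \<subseteq> ls_acks (L t k) \<Longrightarrow> ls_done5 (L t k)"
proof -
  assume a: "k \<in> G" "Q \<in> Qs k" "Q \<subseteq> ls_acks (L t k)"
  have "L t k \<noteq> init_l" using a Q_ne by (auto simp: init_l_def)
  then show ?thesis using settled fix_5 a by (metis covered_def)
qed
lemma trig_6: "k \<in> G \<Longrightarrow> Q \<in> Qs k \<Longrightarrow> Q \<subseteq> ls_readys (L t k) \<Longrightarrow> ls_done6 (L t k)"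
proof -
  assume a: "k \<in> G" "Q \<in> Qs k" "Q \<subseteq> ls_readys (L t k)"
  have "L t k \<noteq> init_l" using a Q_ne by (auto simp: init_l_def)
  then show ?thesis using settled fix_6 a by (metis covered_def)
qed
lemma trig_T: "k \<in> G \<Longrightarrow> Q \<in> Qs k \<Longrightarrow> Q \<subseteq> ls_confs (L t k) \<Longrightarrow> ls_sentT (L t k)"
proof -
  assume a: "k \<in> G" "Q \<in> Qs k" "Q \<subseteq> ls_confs (L t k)"
  have "L t k \<noteq> init_l" using a Q_ne by (auto simp: init_l_def)
  then show ?thesis using settled fix_T a by (metis covered_def)
qed
lemma trig_7: "k \<in> G \<Longrightarrow> is_kernel Qs k K \<Longrightarrow> K \<subseteq> ls_confs (L t k) \<Longrightarrow> ls_done7 (L t k)"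
proof -
  assume a: "k \<in> G" "is_kernel Qs k K" "K \<subseteq> ls_confs (L t k)"
  obtain Q where "Q \<in> Qs k" using a(1) G_prop by blast
  then have "K \<noteq> {}" using a(2) unfolding is_kernel_def by blast
  then have "L t k \<noteq> init_l" using a(3) by (auto simp: init_l_def)
  then show ?thesis using settled fix_7 a by metis
qed

lemma recv_step: "lab t = Receive j k m \<Longrightarrow> (j,k,m) \<in> N t \<and> k \<notin> F \<and>
   L (Suc t) k = settle_st Qs k (fst (recv_local j m (L t k))) \<and>
   {(k,d,mm) | d mm. (d,mm) \<in> snd (recv_local j m (L t k))} \<subseteq> N (Suc t)"
  using step[of t] by (auto simp: ag_step_def do_local_loc do_local_net)

lemma exs1: "\<forall>i. i \<notin> F \<longrightarrow> (\<exists>t. lab t = Propose i)"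
  using ex unfolding AG_execution_def by (elim conjE) assumption
lemma exs2: "\<forall>t j i m. (j, i, m) \<in> g_net (\<sigma> t) \<and> i \<notin> F \<longrightarrow> (\<exists>t'\<ge>t. lab t' = Receive j i m)"
  using ex unfolding AG_execution_def by (elim conjE) assumption
lemma exs3: "\<forall>j k t. j \<notin> F \<and> ls_prop (g_loc (\<sigma> t) j) \<and> k \<in> Gmax Fp Qs F \<longrightarrow> (\<exists>t'. (j, inp j) \<in> ls_S (g_loc (\<sigma> t') k))"
  using ex unfolding AG_execution_def by (elim conjE) assumption
lemma exs4: "\<forall>j i k t t' x y. i \<in> Gmax Fp Qs F \<and> k \<in> Gmax Fp Qs F \<and> (j, x) \<in> ls_S (g_loc (\<sigma> t) i) \<and> (j, y) \<in> ls_S (g_loc (\<sigma> t') k) \<longrightarrow> x = y"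
  using ex unfolding AG_execution_def by (elim conjE) assumption
lemma exs5: "\<forall>j i t x. i \<in> Gmax Fp Qs F \<and> (j, x) \<in> ls_S (g_loc (\<sigma> t) i) \<longrightarrow> (\<forall>k\<in>Gmax Fp Qs F. \<exists>t' y. (j, y) \<in> ls_S (g_loc (\<sigma> t') k))"
  using ex unfolding AG_execution_def by (elim conjE) assumption
lemmas exs = exs1 exs2 exs3 exs4 exs5

lemma fair: "(j,k,m) \<in> N t \<Longrightarrow> k \<notin> F \<Longrightarrow> \<exists>t'\<ge>t. lab t' = Receive j k m"
  using exs(2) by blast

lemma ev_confs: "(j,k,Confirm) \<in> N t \<Longrightarrow> k \<notin> F \<Longrightarrow> \<exists>t'. j \<in> ls_confs (L t' k)"
proof -
  assume a: "(j,k,Confirm) \<in> N t" "k \<notin> F"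
  then obtain t' where "lab t' = Receive j k Confirm" using fair by blast
  then have "j \<in> ls_confs (L (Suc t') k)" using recv_step by (simp add: recv_local_def)
  then show ?thesis by blast
qed
lemma ev_readys: "(j,k,Ready) \<in> N t \<Longrightarrow> k \<notin> F \<Longrightarrow> \<exists>t'. j \<in> ls_readys (L t' k)"
proof -
  assume a: "(j,k,Ready) \<in> N t" "k \<notin> F"
  then obtain t' where "lab t' = Receive j k Ready" using fair by blast
  then have "j \<in> ls_readys (L (Suc t') k)" using recv_step by (simp add: recv_local_def)
  then show ?thesis by blast
qed
lemma ev_acks: "(j,k,Ack) \<in> N t \<Longrightarrow> k \<notin> F \<Longrightarrow> \<exists>t'. j \<in> ls_acks (L t' k)"
proof -
  assume a: "(j,k,Ack) \<in> N t" "k \<notin> F"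
  then obtain t' where "lab t' = Receive j k Ack" using fair by blast
  then have "j \<in> ls_acks (L (Suc t') k)" using recv_step by (simp add: recv_local_def)
  then show ?thesis by blast
qed
lemma ev_distT: "(j,k,DistT X) \<in> N t \<Longrightarrow> k \<notin> F \<Longrightarrow> \<exists>t'. X \<subseteq> ls_U (L t' k) \<or> (j,X) \<in> ls_pendT (L t' k)"
proof -
  assume a: "(j,k,DistT X) \<in> N t" "k \<notin> F"
  then obtain t' where "lab t' = Receive j k (DistT X)" using fair by blast
  then have "X \<subseteq> ls_U (L (Suc t') k) \<or> (j,X) \<in> ls_pendT (L (Suc t') k)"
    using recv_step by (simp add: recv_local_def)
  then show ?thesis by blast
qed
lemma ev_distS: "(j,k,DistS X) \<in> N t \<Longrightarrow> k \<notin> F \<Longrightarrow> \<exists>t'.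
    (X \<subseteq> ls_S (L t' k) \<and> \<not> ls_sentT (L t' k) \<and> (k,j,Ack) \<in> N (Suc t')) \<or>
    (X \<subseteq> ls_S (L t' k) \<and> ls_sentT (L t' k)) \<or> (j,X) \<in> ls_pendS (L (Suc t') k)"
proof -
  assume a: "(j,k,DistS X) \<in> N t" "k \<notin> F"
  then obtain t' where l: "lab t' = Receive j k (DistS X)" using fair by blast
  have "(X \<subseteq> ls_S (L t' k) \<and> \<not> ls_sentT (L t' k) \<and> (k,j,Ack) \<in> N (Suc t')) \<or>
    (X \<subseteq> ls_S (L t' k) \<and> ls_sentT (L t' k)) \<or> (j,X) \<in> ls_pendS (L (Suc t') k)"
    using recv_step[OF l] by (auto simp: recv_local_def)
  then show ?thesis by blast
qed

lemma arb_valid: "j \<notin> F \<Longrightarrow> ls_prop (L t j) \<Longrightarrow> k \<in> G \<Longrightarrow> \<exists>t'. (j, inp j) \<in> ls_S (L t' k)"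
  using exs(3)[rule_format, where j=j and k=k and t=t] by blast
lemma arb_agree: "i \<in> G \<Longrightarrow> k \<in> G \<Longrightarrow> (j,x) \<in> ls_S (L t i) \<Longrightarrow> (j,y) \<in> ls_S (L t' k) \<Longrightarrow> x = y"
  using exs(4)[rule_format, where j=j and i=i and k=k and t=t and t'=t' and x=x and y=y] by blast
lemma arb_total: "i \<in> G \<Longrightarrow> (j,x) \<in> ls_S (L t i) \<Longrightarrow> k \<in> G \<Longrightarrow> \<exists>t' y. (j,y) \<in> ls_S (L t' k)"
  using exs(5)[rule_format, where j=j and i=i and t=t and x=x] by blast

lemma propose: "j \<notin> F \<Longrightarrow> \<exists>t. ls_prop (L t j)"
proof -
  assume "j \<notin> F"
  then obtain t where l: "lab t = Propose j" using exs(1) by blast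
  then have "L (Suc t) j = settle_st Qs j ((L t j)\<lparr>ls_prop := True\<rparr>)"
    using step[of t] by (simp add: ag_step_def do_local_loc)
  then have "ls_prop (L (Suc t) j)" by simp
  then show ?thesis by blast
qed

lemma ev_S: assumes "x \<in> ls_S (L t k)" shows "eventually (\<lambda>t'. x \<in> ls_S (L t' k)) sequentially"
proof -
  { fix n assume "t \<le> n"
    then have "le_l (L t k) (L n k)" by (rule mono_t)
    then have "ls_S (L t k) \<subseteq> ls_S (L n k)" by (simp add: le_l_def)
    then have "x \<in> ls_S (L n k)" using assms by blast }
  then show ?thesis unfolding eventually_sequentially by blast
qed
lemma ev_U: assumes "X \<subseteq> ls_U (L t k)" shows "eventually (\<lambda>t'. X \<subseteq> ls_U (L t' k)) sequentially"
proof -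
  { fix n assume "t \<le> n"
    then have "le_l (L t k) (L n k)" by (rule mono_t)
    then have "ls_U (L t k) \<subseteq> ls_U (L n k)" by (simp add: le_l_def)
    then have "X \<subseteq> ls_U (L n k)" using assms by blast }
  then show ?thesis unfolding eventually_sequentially by blast
qed
lemma ev_acks': assumes "x \<in> ls_acks (L t k)" shows "eventually (\<lambda>t'. x \<in> ls_acks (L t' k)) sequentially"
proof -
  { fix n assume "t \<le> n"
    then have "le_l (L t k) (L n k)" by (rule mono_t)
    then have "ls_acks (L t k) \<subseteq> ls_acks (L n k)" by (simp add: le_l_def)
    then have "x \<in> ls_acks (L n k)" using assms by blast }
  then show ?thesis unfolding eventually_sequentially by blast
qed
lemma ev_readys': assumes "x \<in> ls_readys (L t k)" shows "eventually (\<lambda>t'. x \<in> ls_readys (L t' k)) sequentially"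
proof -
  { fix n assume "t \<le> n"
    then have "le_l (L t k) (L n k)" by (rule mono_t)
    then have "ls_readys (L t k) \<subseteq> ls_readys (L n k)" by (simp add: le_l_def)
    then have "x \<in> ls_readys (L n k)" using assms by blast }
  then show ?thesis unfolding eventually_sequentially by blast
qed
lemma ev_confs': assumes "x \<in> ls_confs (L t k)" shows "eventually (\<lambda>t'. x \<in> ls_confs (L t' k)) sequentially"
proof -
  { fix n assume "t \<le> n"
    then have "le_l (L t k) (L n k)" by (rule mono_t)
    then have "ls_confs (L t k) \<subseteq> ls_confs (L n k)" by (simp add: le_l_def)
    then have "x \<in> ls_confs (L n k)" using assms by blast }
  then show ?thesis unfolding eventually_sequentially by blast
qed

lemma ev_ex: "eventually P sequentially \<Longrightarrow> \<exists>t. P t"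
  using eventually_sequentially by blast

lemma transfer: assumes a: "i \<in> G" "k \<in> G" "X \<subseteq> ls_S (L t i)"
  shows "eventually (\<lambda>t'. X \<subseteq> ls_S (L t' k)) sequentially"
proof -
  have fin: "finite (fst ` X)" by simp
  have each: "eventually (\<lambda>t'. \<exists>y. (p,y) \<in> ls_S (L t' k)) sequentially" if p: "p \<in> fst ` X" for p
  proof -
    obtain z where z: "z \<in> X" "p = fst z" using p by blast
    obtain x where px: "(p,x) \<in> X" using z by (metis prod.collapse)
    then have "(p,x) \<in> ls_S (L t i)" using a(3) by blast
    from arb_total[OF a(1) this a(2)] obtain t' y where "(p,y) \<in> ls_S (L t' k)" by blast
    then have "eventually (\<lambda>t''. (p,y) \<in> ls_S (L t'' k)) sequentially" by (rule ev_S)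
    then show ?thesis by (rule eventually_mono) (rule exI)
  qed
  have "eventually (\<lambda>t'. \<forall>p\<in>fst ` X. \<exists>y. (p,y) \<in> ls_S (L t' k)) sequentially"
    by (intro eventually_ball_finite fin ballI each)
  then show ?thesis
  proof (rule eventually_mono)
    fix t' assume h: "\<forall>p\<in>fst ` X. \<exists>y. (p,y) \<in> ls_S (L t' k)"
    show "X \<subseteq> ls_S (L t' k)"
    proof
      fix z assume z: "z \<in> X"
      obtain p v where zp: "z = (p,v)" by fastforce
      have "p \<in> fst ` X" using z zp by force
      then obtain y where y: "(p,y) \<in> ls_S (L t' k)" using h by blast
      have "(p,v) \<in> ls_S (L t i)" using a(3) z zp by blast
      then have "v = y" using arb_agree[OF a(1,2) _ y] by blast
      then show "z \<in> ls_S (L t' k)" using y zp by simp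
    qed
  qed
qed

end



context agx begin

lemma ev_all: assumes "finite Q" "\<And>p. p \<in> Q \<Longrightarrow> eventually (\<lambda>t. P p t) sequentially"
  shows "\<exists>t. \<forall>p\<in>Q. P p t"
proof -
  have "eventually (\<lambda>t. \<forall>p\<in>Q. P p t) sequentially"
    by (intro eventually_ball_finite assms(1) ballI assms(2))
  then show ?thesis by (rule ev_ex)
qed

lemma linv0_t: "linv0 Qs k (L t k)" using linv_t[of k t] by (simp add: linv_def)

lemma sentT_cov: "ls_sentT (L t k) \<Longrightarrow> \<exists>Q\<in>Qs k. Q \<subseteq> ls_confs (L t k)"
  using linv0_t[of k t] unfolding linv0_def covered_def by blast
lemma done5_cov: "ls_done5 (L t k) \<Longrightarrow> \<exists>Q\<in>Qs k. Q \<subseteq> ls_acks (L t k)"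
  using linv0_t[of k t] unfolding linv0_def covered_def by blast
lemma done6_cov: "ls_done6 (L t k) \<Longrightarrow> \<exists>Q\<in>Qs k. Q \<subseteq> ls_readys (L t k)"
  using linv0_t[of k t] unfolding linv0_def covered_def by blast
lemma done7_ker: "ls_done7 (L t k) \<Longrightarrow> \<exists>K. is_kernel Qs k K \<and> K \<subseteq> ls_confs (L t k)"
  using linv0_t[of k t] unfolding linv0_def by blast
lemma sentS_sub: "ls_sentS (L t k) = Some X \<Longrightarrow> X \<subseteq> ls_S (L t k)"
  using linv0_t[of k t] unfolding linv0_def by blast
lemma T_sub: "ls_T (L t k) \<subseteq> ls_S (L t k)"
  using linv0_t[of k t] unfolding linv0_def by blast
lemma pendS_nsub: "(j,X) \<in> ls_pendS (L t k) \<Longrightarrow> \<not> X \<subseteq> ls_S (L t k)"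
  using linv0_t[of k t] unfolding linv0_def by blast
lemma pendT_nsub: "(j,X) \<in> ls_pendT (L t k) \<Longrightarrow> \<not> X \<subseteq> ls_S (L t k)"
  using linv0_t[of k t] unfolding linv0_def by blast

lemma gi_ack: "j \<notin> F \<Longrightarrow> k \<notin> F \<Longrightarrow> j \<in> ls_acks (L t k) \<Longrightarrow> \<exists>Y. ls_sentS (L t k) = Some Y \<and> Y \<subseteq> ls_T (L t j)"
  using ginv_t[of t] unfolding ginv_def by blast
lemma gi_ready: "j \<notin> F \<Longrightarrow> j \<in> ls_readys (L t k) \<Longrightarrow> ls_done5 (L t j)"
  using ginv_t[of t] unfolding ginv_def by blast
lemma gi_conf: "j \<notin> F \<Longrightarrow> j \<in> ls_confs (L t k) \<Longrightarrow> ls_done6 (L t j) \<or> ls_done7 (L t j)"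
  using ginv_t[of t] unfolding ginv_def by blast
lemma gi_confN: "j \<notin> F \<Longrightarrow> (j,k,Confirm) \<in> N t \<Longrightarrow> ls_done6 (L t j) \<or> ls_done7 (L t j)"
  using ginv_t[of t] unfolding ginv_def by blast

lemma pendS_stable: "t1 \<le> t2 \<Longrightarrow> (\<forall>t. \<not> ls_sentT (L t j)) \<Longrightarrow> (i,X) \<in> ls_pendS (L t1 j) \<Longrightarrow>
   (i,X) \<in> ls_pendS (L t2 j) \<or> (\<exists>t0. (j,i,Ack) \<in> N t0)"
proof (induction t2 rule: dec_induct)
  case base then show ?case by blast
next
  case (step t)
  show ?case
  proof (cases "(i,X) \<in> ls_pendS (L t j)")
    case False then show ?thesis using step by blast
  next
    case True
    from step_j[of t j] show ?thesis
    proof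
      assume "L (Suc t) j = L t j" then show ?thesis using True by simp
    next
      assume "\<exists>ls1 out0. j \<notin> F \<and> L (Suc t) j = settle_st Qs j ls1 \<and>
       {(j,d,m) | d m. (d,m) \<in> out0 \<union> settle_out Qs j ls1} \<subseteq> N (Suc t) \<and>
       le_l (L t j) ls1 \<and> FL (L t j) ls1 \<and> PT (L t j) ls1 \<and> PS (L t j) ls1 out0"
      then obtain ls1 out0 where h: "L (Suc t) j = settle_st Qs j ls1"
        "{(j,d,m) | d m. (d,m) \<in> out0 \<union> settle_out Qs j ls1} \<subseteq> N (Suc t)" "PS (L t j) ls1 out0" by blast
      have "(i,X) \<in> ls_pendS ls1 \<or> (i,Ack) \<in> out0" using h(3) True step.prems(1) unfolding PS_def by blast
      then show ?thesis
      proof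
        assume "(i,X) \<in> ls_pendS ls1" then show ?thesis using h(1) by simp
      next
        assume "(i,Ack) \<in> out0" then have "(j,i,Ack) \<in> N (Suc t)" using h(2) by blast
        then show ?thesis by blast
      qed
    qed
  qed
qed

lemma pendT_stable: "t1 \<le> t2 \<Longrightarrow> X \<subseteq> ls_U (L t1 k) \<or> (j,X) \<in> ls_pendT (L t1 k) \<Longrightarrow>
   X \<subseteq> ls_U (L t2 k) \<or> (j,X) \<in> ls_pendT (L t2 k)"
proof (induction t2 rule: dec_induct)
  case base then show ?case by blast
next
  case (step t)
  have IH: "X \<subseteq> ls_U (L t k) \<or> (j,X) \<in> ls_pendT (L t k)" using step by blast
  have mU: "ls_U (L t k) \<subseteq> ls_U (L (Suc t) k)" using step_mono[OF agx.step[OF agx_axioms, of t], of k] by (simp add: le_l_def)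
  from step_j[of t k] show ?case
  proof
    assume "L (Suc t) k = L t k" then show ?thesis using IH by simp
  next
    assume "\<exists>ls1 out0. k \<notin> F \<and> L (Suc t) k = settle_st Qs k ls1 \<and>
     {(k,d,m) | d m. (d,m) \<in> out0 \<union> settle_out Qs k ls1} \<subseteq> N (Suc t) \<and>
     le_l (L t k) ls1 \<and> FL (L t k) ls1 \<and> PT (L t k) ls1 \<and> PS (L t k) ls1 out0"
    then obtain ls1 where h: "L (Suc t) k = settle_st Qs k ls1" "PT (L t k) ls1" by blast
    show ?thesis
    proof (cases "X \<subseteq> ls_U (L t k)")
      case True then show ?thesis using mU by blast
    next
      case False
      then have "(j,X) \<in> ls_pendT (L t k)" using IH by blast
      then have "(j,X) \<in> ls_pendT ls1 \<or> X \<subseteq> ls_U ls1" using h(2) unfolding PT_def by blast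
      then show ?thesis using h(1) by auto
    qed
  qed
qed

lemma T_bound: "ls_sentT (L t1 j) \<Longrightarrow> ls_T (L t j) \<subseteq> ls_T (L t1 j)"
proof (cases "t \<le> t1")
  case True then show ?thesis using mono_t[OF True, of j] by (simp add: le_l_def)
next
  case False
  then have "t1 \<le> t" by simp
  then have "le_l (L t1 j) (L t j)" by (rule mono_t)
  moreover assume "ls_sentT (L t1 j)"
  ultimately show ?thesis by (simp add: le_l_def)
qed

end



context agx begin

lemma some_sentT: "\<exists>x\<in>G. \<exists>t. ls_sentT (L t x)"
proof (rule ccontr)
  assume "\<not> (\<exists>x\<in>G. \<exists>t. ls_sentT (L t x))"
  then have nT: "\<And>x t. x \<in> G \<Longrightarrow> \<not> ls_sentT (L t x)" by blast
  have C1: "\<exists>t X. ls_sentS (L t i) = Some X" if i: "i \<in> G" for i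
  proof -
    obtain Q where Q: "Q \<in> Qs i" "Q \<subseteq> G" using G_prop[OF i] by blast
    have ev1: "eventually (\<lambda>t. (p, inp p) \<in> ls_S (L t i)) sequentially" if p: "p \<in> Q" for p
    proof -
      have pF: "p \<notin> F" using G_nF p Q(2) by blast
      obtain t0 where "ls_prop (L t0 p)" using propose[OF pF] by blast
      from arb_valid[OF pF this i] obtain t1 where "(p, inp p) \<in> ls_S (L t1 i)" by blast
      then show ?thesis by (rule ev_S)
    qed
    have "\<exists>t. \<forall>p\<in>Q. (p, inp p) \<in> ls_S (L t i)" by (rule ev_all) (auto intro: ev1)
    then obtain t where t: "\<forall>p\<in>Q. (p, inp p) \<in> ls_S (L t i)" by blast
    have "Q \<subseteq> fst ` ls_S (L t i)" using t by force
    then have "ls_sentS (L t i) \<noteq> None" by (rule trig_S[OF i Q(1)])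
    then show ?thesis by blast
  qed
  have C2: "\<exists>t. j \<in> ls_acks (L t i)" if i: "i \<in> G" and j: "j \<in> G" for i j
  proof -
    obtain t X where X: "ls_sentS (L t i) = Some X" using C1[OF i] by blast
    obtain t0 where "(i,j,DistS X) \<in> N t0" using H_DistS[OF X, where k=j] by blast
    from ev_distS[OF this G_nF[OF j]] obtain t' where
      c: "(X \<subseteq> ls_S (L t' j) \<and> \<not> ls_sentT (L t' j) \<and> (j,i,Ack) \<in> N (Suc t')) \<or>
    (X \<subseteq> ls_S (L t' j) \<and> ls_sentT (L t' j)) \<or> (i,X) \<in> ls_pendS (L (Suc t') j)" by blast
    have "\<exists>t0. (j,i,Ack) \<in> N t0"
    proof -
      { assume p: "(i,X) \<in> ls_pendS (L (Suc t') j)"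
        have "eventually (\<lambda>t''. X \<subseteq> ls_S (L t'' j)) sequentially" by (rule transfer[OF i j sentS_sub[OF X]])
        then obtain n where n: "\<forall>t''\<ge>n. X \<subseteq> ls_S (L t'' j)" unfolding eventually_sequentially by blast
        define t2 where "t2 = max n (Suc t')"
        have le: "Suc t' \<le> t2" unfolding t2_def by simp
        have nTj: "\<forall>t. \<not> ls_sentT (L t j)" using nT[OF j] by blast
        have "(i,X) \<in> ls_pendS (L t2 j) \<or> (\<exists>t0. (j,i,Ack) \<in> N t0)"
          by (rule pendS_stable[OF le nTj p])
        moreover have "X \<subseteq> ls_S (L t2 j)" using n unfolding t2_def by simp
        ultimately have ?thesis using pendS_nsub[of i X t2 j] by blast }
      then show ?thesis using c nT[OF j] by blast
    qed
    then obtain t0 where "(j,i,Ack) \<in> N t0" by blast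
    from ev_acks[OF this G_nF[OF i]] show ?thesis .
  qed
  have C3: "\<exists>t. ls_done5 (L t i)" if i: "i \<in> G" for i
  proof -
    obtain Q where Q: "Q \<in> Qs i" "Q \<subseteq> G" using G_prop[OF i] by blast
    have ev1: "eventually (\<lambda>t. p \<in> ls_acks (L t i)) sequentially" if p: "p \<in> Q" for p
    proof -
      obtain t where "p \<in> ls_acks (L t i)" using C2[OF i, of p] p Q(2) by blast
      then show ?thesis by (rule ev_acks')
    qed
    have "\<exists>t. \<forall>p\<in>Q. p \<in> ls_acks (L t i)" by (rule ev_all) (auto intro: ev1)
    then obtain t where "Q \<subseteq> ls_acks (L t i)" by blast
    then show ?thesis using trig_5[OF i Q(1)] by blast
  qed
  have C4: "\<exists>t. j \<in> ls_readys (L t i)" if i: "i \<in> G" and j: "j \<in> G" for i j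
  proof -
    obtain t where "ls_done5 (L t j)" using C3[OF j] by blast
    then obtain t0 where "(j,i,Ready) \<in> N t0" using H_Ready[where k=i] by blast
    from ev_readys[OF this G_nF[OF i]] show ?thesis .
  qed
  have C5: "\<exists>t. ls_done6 (L t i)" if i: "i \<in> G" for i
  proof -
    obtain Q where Q: "Q \<in> Qs i" "Q \<subseteq> G" using G_prop[OF i] by blast
    have ev1: "eventually (\<lambda>t. p \<in> ls_readys (L t i)) sequentially" if p: "p \<in> Q" for p
    proof -
      obtain t where "p \<in> ls_readys (L t i)" using C4[OF i, of p] p Q(2) by blast
      then show ?thesis by (rule ev_readys')
    qed
    have "\<exists>t. \<forall>p\<in>Q. p \<in> ls_readys (L t i)" by (rule ev_all) (auto intro: ev1)
    then obtain t where "Q \<subseteq> ls_readys (L t i)" by blast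
    then show ?thesis using trig_6[OF i Q(1)] by blast
  qed
  have C6: "\<exists>t. j \<in> ls_confs (L t i)" if i: "i \<in> G" and j: "j \<in> G" for i j
  proof -
    obtain t where "ls_done6 (L t j)" using C5[OF j] by blast
    then have "ls_done6 (L t j) \<or> ls_done7 (L t j)" by blast
    then obtain t0 where "(j,i,Confirm) \<in> N t0" using H_Confirm[where k=i] by blast
    from ev_confs[OF this G_nF[OF i]] show ?thesis .
  qed
  have C7: "\<exists>t. ls_sentT (L t i)" if i: "i \<in> G" for i
  proof -
    obtain Q where Q: "Q \<in> Qs i" "Q \<subseteq> G" using G_prop[OF i] by blast
    have ev1: "eventually (\<lambda>t. p \<in> ls_confs (L t i)) sequentially" if p: "p \<in> Q" for p
    proof -
      obtain t where "p \<in> ls_confs (L t i)" using C6[OF i, of p] p Q(2) by blast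
      then show ?thesis by (rule ev_confs')
    qed
    have "\<exists>t. \<forall>p\<in>Q. p \<in> ls_confs (L t i)" by (rule ev_all) (auto intro: ev1)
    then obtain t where "Q \<subseteq> ls_confs (L t i)" by blast
    then show ?thesis using trig_T[OF i Q(1)] by blast
  qed
  obtain x where x: "x \<in> G" using G_ne by blast
  show False using C7[OF x] nT[OF x] by blast
qed

lemma all_done7: assumes x: "x \<in> G" and sx: "ls_sentT (L t x)" and k: "k \<in> G" shows "\<exists>t. ls_done7 (L t k)"
proof -
  obtain Q where Q: "Q \<in> Qs x" "Q \<subseteq> ls_confs (L t x)" using sentT_cov[OF sx] by blast
  have wx: "wise Fp F x" using G_prop[OF x] by blast
  have ev1: "eventually (\<lambda>t'. c \<in> ls_confs (L t' k)) sequentially" if c: "c \<in> Q - F" for c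
  proof -
    have cF: "c \<notin> F" using c by blast
    have "ls_done6 (L t c) \<or> ls_done7 (L t c)" using gi_conf[OF cF] c Q(2) by blast
    then obtain t0 where "(c,k,Confirm) \<in> N t0" using H_Confirm[where k=k] by blast
    from ev_confs[OF this G_nF[OF k]] obtain t1 where "c \<in> ls_confs (L t1 k)" by blast
    then show ?thesis by (rule ev_confs')
  qed
  have "\<exists>t'. \<forall>c\<in>Q - F. c \<in> ls_confs (L t' k)" by (rule ev_all) (auto intro: ev1)
  then obtain t' where "Q - F \<subseteq> ls_confs (L t' k)" by blast
  then show ?thesis using trig_7[OF k kernel[OF wx Q(1) k]] by blast
qed

lemma all_sentT: assumes x: "x \<in> G" "ls_sentT (L t x)" and k: "k \<in> G" shows "\<exists>t. ls_sentT (L t k)"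
proof -
  obtain Q where Q: "Q \<in> Qs k" "Q \<subseteq> G" using G_prop[OF k] by blast
  have ev1: "eventually (\<lambda>t'. c \<in> ls_confs (L t' k)) sequentially" if c: "c \<in> Q" for c
  proof -
    have cG: "c \<in> G" using c Q(2) by blast
    obtain t1 where "ls_done7 (L t1 c)" using all_done7[OF x cG] by blast
    then have "ls_done6 (L t1 c) \<or> ls_done7 (L t1 c)" by blast
    then obtain t0 where "(c,k,Confirm) \<in> N t0" using H_Confirm[where k=k] by blast
    from ev_confs[OF this G_nF[OF k]] obtain t2 where "c \<in> ls_confs (L t2 k)" by blast
    then show ?thesis by (rule ev_confs')
  qed
  have "\<exists>t'. \<forall>c\<in>Q. c \<in> ls_confs (L t' k)" by (rule ev_all) (auto intro: ev1)
  then obtain t' where "Q \<subseteq> ls_confs (L t' k)" by blast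
  then show ?thesis using trig_T[OF k Q(1)] by blast
qed

lemma some_done5: "\<exists>i\<in>G. \<exists>t. ls_done5 (L t i)"
proof -
  obtain x t where x: "x \<in> G" "ls_sentT (L t x)" using some_sentT by blast
  obtain t7 where "ls_done7 (L t7 x)" using all_done7[OF x x(1)] by blast
  then have ex: "\<exists>t. \<exists>c\<in>G. ls_done6 (L t c) \<or> ls_done7 (L t c)" using x(1) by blast
  define tc where "tc = (LEAST t. \<exists>c\<in>G. ls_done6 (L t c) \<or> ls_done7 (L t c))"
  have tc: "\<exists>c\<in>G. ls_done6 (L tc c) \<or> ls_done7 (L tc c)" unfolding tc_def by (rule LeastI_ex[OF ex])
  have min: "\<not> (ls_done6 (L t c) \<or> ls_done7 (L t c))" if "t < tc" "c \<in> G" for t c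
    using not_less_Least[OF that(1)[unfolded tc_def]] that(2) by blast
  obtain c where c: "c \<in> G" "ls_done6 (L tc c) \<or> ls_done7 (L tc c)" using tc by blast
  obtain Qc where Qc: "Qc \<in> Qs c" "Qc \<subseteq> G" using G_prop[OF c(1)] by blast
  have wc: "wise Fp F c" using G_prop[OF c(1)] by blast
  show ?thesis
  proof (cases "ls_done6 (L tc c)")
    case True
    obtain Q where Q: "Q \<in> Qs c" "Q \<subseteq> ls_readys (L tc c)" using done6_cov[OF True] by blast
    obtain g where g: "g \<in> Q \<inter> Qc" "g \<notin> F" using qi[OF wc wc Q(1) Qc(1)] by blast
    have "ls_done5 (L tc g)" using gi_ready[OF g(2)] g(1) Q(2) by blast
    then show ?thesis using g(1) Qc(2) by blast
  next
    case False
    then have d7: "ls_done7 (L tc c)" using c(2) by blast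
    obtain K where K: "is_kernel Qs c K" "K \<subseteq> ls_confs (L tc c)" using done7_ker[OF d7] by blast
    obtain g where g: "g \<in> K" "g \<in> Qc" using K(1) Qc(1) unfolding is_kernel_def by blast
    have gG: "g \<in> G" using g(2) Qc(2) by blast
    have gF: "g \<notin> F" using G_nF[OF gG] .
    have "g \<in> ls_confs (L tc c)" using g(1) K(2) by blast
    from H_conf_time[OF gF this] obtain t0 where t0: "t0 < tc" "(g,c,Confirm) \<in> N t0" by blast
    have "ls_done6 (L t0 g) \<or> ls_done7 (L t0 g)" using gi_confN[OF gF t0(2)] .
    then show ?thesis using min[OF t0(1) gG] by blast
  qed
qed

theorem main: "\<exists>i\<in>G. \<exists>t Si. ls_sentS (L t i) = Some Si \<and> (\<forall>k\<in>G. \<exists>t'. \<forall>t''\<ge>t'. Si \<subseteq> ls_U (L t'' k))"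
proof -
  obtain i tr where i: "i \<in> G" "ls_done5 (L tr i)" using some_done5 by blast
  obtain Qi where Qi: "Qi \<in> Qs i" "Qi \<subseteq> ls_acks (L tr i)" using done5_cov[OF i(2)] by blast
  have wi: "wise Fp F i" using G_prop[OF i(1)] by blast
  have iF: "i \<notin> F" using G_nF[OF i(1)] .
  obtain j0 where j0: "j0 \<in> Qi" "j0 \<notin> F" using qi[OF wi wi Qi(1) Qi(1)] by blast
  have "j0 \<in> ls_acks (L tr i)" using j0(1) Qi(2) by blast
  from gi_ack[OF j0(2) iF this] obtain Si where Si: "ls_sentS (L tr i) = Some Si" by blast
  obtain x tx where x: "x \<in> G" "ls_sentT (L tx x)" using some_sentT by blast
  have "\<exists>t'. \<forall>t''\<ge>t'. Si \<subseteq> ls_U (L t'' k)" if k: "k \<in> G" for k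
  proof -
    obtain Qk where Qk: "Qk \<in> Qs k" "Qk \<subseteq> G" using G_prop[OF k] by blast
    have wk: "wise Fp F k" using G_prop[OF k] by blast
    obtain j where j: "j \<in> Qi \<inter> Qk" "j \<notin> F" using qi[OF wi wk Qi(1) Qk(1)] by blast
    have jG: "j \<in> G" using j Qk(2) by blast
    have "j \<in> ls_acks (L tr i)" using j(1) Qi(2) by blast
    from gi_ack[OF j(2) iF this] obtain Y where Y: "ls_sentS (L tr i) = Some Y" "Y \<subseteq> ls_T (L tr j)" by blast
    have SiT: "Si \<subseteq> ls_T (L tr j)" using Y Si by simp
    obtain tj where tj: "ls_sentT (L tj j)" using all_sentT[OF x jG] by blast
    define Tj where "Tj = ls_T (L tj j)"
    have SiTj: "Si \<subseteq> Tj" using SiT T_bound[OF tj, of tr] unfolding Tj_def by blast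
    obtain t0 where "(j,k,DistT Tj) \<in> N t0" using H_DistT[OF tj, where k=k] unfolding Tj_def by blast
    from ev_distT[OF this G_nF[OF k]] obtain t1 where t1: "Tj \<subseteq> ls_U (L t1 k) \<or> (j,Tj) \<in> ls_pendT (L t1 k)" by blast
    have TjS: "Tj \<subseteq> ls_S (L tj j)" unfolding Tj_def by (rule T_sub)
    have "eventually (\<lambda>t. Tj \<subseteq> ls_S (L t k)) sequentially" by (rule transfer[OF jG k TjS])
    then obtain n where n: "\<forall>t\<ge>n. Tj \<subseteq> ls_S (L t k)" unfolding eventually_sequentially by blast
    have "\<forall>t''\<ge>max n t1. Si \<subseteq> ls_U (L t'' k)"
    proof (intro allI impI)
      fix t'' assume "max n t1 \<le> t''"
      then have a: "t1 \<le> t''" "n \<le> t''" by auto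
      have "Tj \<subseteq> ls_U (L t'' k) \<or> (j,Tj) \<in> ls_pendT (L t'' k)" by (rule pendT_stable[OF a(1) t1])
      moreover have "Tj \<subseteq> ls_S (L t'' k)" using n a(2) by blast
      ultimately have "Tj \<subseteq> ls_U (L t'' k)" using pendT_nsub[of j Tj t'' k] by blast
      then show "Si \<subseteq> ls_U (L t'' k)" using SiTj by blast
    qed
    then show ?thesis by blast
  qed
  then show ?thesis using i(1) Si by blast
qed

end

theorem lemma3p7:
  fixes Fp Qs :: "'p::finite \<Rightarrow> 'p set set"
    and F :: "'p set"
    and inp :: "'p \<Rightarrow> 'v"
    and \<sigma> :: "nat \<Rightarrow> ('p,'v) gstate"
    and lab :: "nat \<Rightarrow> ('p,'v) label"
  assumes "asym_quorum_system Fp Qs"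
    and "AG_execution Fp Qs F inp \<sigma> lab"
    and "exec_with_guild Fp Qs F"
  shows "\<exists>i\<in>Gmax Fp Qs F. \<exists>t Si. ls_sentS (g_loc (\<sigma> t) i) = Some Si \<and>
           (\<forall>k\<in>Gmax Fp Qs F. \<exists>t'. \<forall>t''\<ge>t'. Si \<subseteq> ls_U (g_loc (\<sigma> t'') k))"
proof -
  interpret agx Fp Qs F inp \<sigma> lab using assms by (unfold_locales) auto
  show ?thesis by (rule main)
qed


end
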